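(* Let $n\ge2$, let $\mathrm S\subseteq\{B_{ij}\}\cup\{C_{ij}\}\cup\{D_{ij}\}$ ($1\le i<j\le n$) with associated edge-colored multigraph $\mathscr G_{\mathrm S}$, and let $A\in\mathfrak{su}(n)$ with associated edge-colored multigraph $\mathscr G_A$. Suppose (i) each connected component of $\mathscr G_{\mathrm S}$ contains at least three nodes; (ii) $\mathscr G_A$ has no multi-edges and the union $\mathscr G_A\cup\mathscr G_{\mathrm S}$ is connected; (iii) $\mathscr G_A\cup\mathscr G_{\mathrm S}$ has a self-loop or a cycle containing an odd number of Red edges. Then the real Lie algebra generated by $\{A\}\cup\mathrm S$ equals $\mathfrak{su}(n)$.
   Context: $E_{ij}$ is the $n\times n$ matrix unit; $B_{ij}=E_{ij}-E_{ji}$, $C_{ij}=\mathrm i(E_{ij}+E_{ji})$, $D_{ij}=\mathrm i(E_{ii}-E_{jj})$; $\mathfrak{su}(n)$ is the real Lie algebra of traceless skew-Hermitian matrices with commutator bracket. Edge-colored multigraphs have node set $\{1,\dots,n\}$ and edges $\{i,j;c\}$, $c\in\{\text{Blue},\text{Red},\text{Green}\}$ ($\{i,i;c\}$ a self-loop; a multi-edge is two or more edges of different colors with identical endpoints). $\mathscr G_{\mathrm S}$: a Blue edge $\{i,j\}$ for each $B_{ij}\in\mathrm S$, a Red edge $\{i,j\}$ for each $C_{ij}\in\mathrm S$, Green self-loops $\{i,i\},\{j,j\}$ for each $D_{ij}\in\mathrm S$. $\mathscr G_A$: a Blue edge $\{i,j\}$ ($i\ne j$) iff $\mathrm{Re}(A_{ij})\ne0$,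 a Red edge $\{i,j\}$ ($i\ne j$) iff $\mathrm{Im}(A_{ij})\ne0$, a Green self-loop $\{i,i\}$ iff $A_{ii}\ne0$. The union has the union of edge sets. A cycle is a closed walk; connected means any two nodes are joined by a walk; components are maximal connected subgraphs. *)

theory Defs
  imports "Jordan_Normal_Form.Matrix"
begin

text \<open>Indices are 0-based: the paper's node/index k (1..n) corresponds to k-1 here.\<close>

datatype gen = GB nat nat | GC nat nat | GD nat nat

definition Emat :: "nat \<Rightarrow> nat \<Rightarrow> nat \<Rightarrow> complex mat" where
  "Emat n i j = mat n n (\<lambda>(k,l). if k = i \<and> l = j then 1 else 0)"

fun gen_mat :: "nat \<Rightarrow> gen \<Rightarrow> complex mat" where
  "gen_mat n (GB i j) = Emat n i j - Emat n j i"
| "gen_mat n (GC i j) = \<i> \<cdot>\<^sub>m (Emat n i j + Emat n j i)"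
| "gen_mat n (GD i j) = \<i> \<cdot>\<^sub>m (Emat n i i - Emat n j j)"

definition valid_gen :: "nat \<Rightarrow> gen \<Rightarrow> bool" where
  "valid_gen n g = (case g of GB i j \<Rightarrow> i < j \<and> j < n
                            | GC i j \<Rightarrow> i < j \<and> j < n
                            | GD i j \<Rightarrow> i < j \<and> j < n)"

definition su :: "nat \<Rightarrow> complex mat set" where
  "su n = {A \<in> carrier_mat n n.
             (\<forall>i<n. \<forall>j<n. A $$ (i,j) = - cnj (A $$ (j,i))) \<and>
             (\<Sum>i<n. A $$ (i,i)) = 0}"

definition commutator :: "complex mat \<Rightarrow> complex mat \<Rightarrow> complex mat" where
  "commutator X Y = X * Y - Y * X"

inductive_set lie_gen :: "nat \<Rightarrow> complex mat set \<Rightarrow> complex mat set"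
  for n :: nat and X :: "complex mat set" where
  base: "x \<in> X \<Longrightarrow> x \<in> carrier_mat n n \<Longrightarrow> x \<in> lie_gen n X"
| zero: "0\<^sub>m n n \<in> lie_gen n X"
| smult: "x \<in> lie_gen n X \<Longrightarrow> complex_of_real r \<cdot>\<^sub>m x \<in> lie_gen n X"
| add: "x \<in> lie_gen n X \<Longrightarrow> y \<in> lie_gen n X \<Longrightarrow> x + y \<in> lie_gen n X"
| bracket: "x \<in> lie_gen n X \<Longrightarrow> y \<in> lie_gen n X \<Longrightarrow> commutator x y \<in> lie_gen n X"

text \<open>Edge-colored multigraphs on node set {0..<n}. An edge is (endpoint set, colour);
  the endpoint set is {i,j} (a singleton {i} for a self-loop).\<close>
datatype color = Blue | Red | Green

type_synonym edge = "nat set \<times> color"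

definition edges_S :: "gen set \<Rightarrow> edge set" where
  "edges_S S =
     {({i,j}, Blue) | i j. GB i j \<in> S} \<union>
     {({i,j}, Red) | i j. GC i j \<in> S} \<union>
     {({i}, Green) | i j. GD i j \<in> S} \<union>
     {({j}, Green) | i j. GD i j \<in> S}"

definition edges_A :: "nat \<Rightarrow> complex mat \<Rightarrow> edge set" where
  "edges_A n A =
     {({i,j}, Blue) | i j. i < n \<and> j < n \<and> i \<noteq> j \<and> Re (A $$ (i,j)) \<noteq> 0} \<union>
     {({i,j}, Red) | i j. i < n \<and> j < n \<and> i \<noteq> j \<and> Im (A $$ (i,j)) \<noteq> 0} \<union>
     {({i}, Green) | i. i < n \<and> A $$ (i,i) \<noteq> 0}"

definition adj :: "edge set \<Rightarrow> nat \<Rightarrow> nat \<Rightarrow> bool" where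
  "adj E u v = (\<exists>c. ({u,v}, c) \<in> E)"

definition reach :: "edge set \<Rightarrow> nat \<Rightarrow> nat \<Rightarrow> bool" where
  "reach E = (adj E)\<^sup>*\<^sup>*"

definition component :: "nat \<Rightarrow> edge set \<Rightarrow> nat \<Rightarrow> nat set" where
  "component n E v = {u. u < n \<and> reach E v u}"

definition connected_graph :: "nat \<Rightarrow> edge set \<Rightarrow> bool" where
  "connected_graph n E = (\<forall>u<n. \<forall>v<n. reach E u v)"

definition no_multi_edges :: "edge set \<Rightarrow> bool" where
  "no_multi_edges E = (\<forall>e c1 c2. (e, c1) \<in> E \<longrightarrow> (e, c2) \<in> E \<longrightarrow> c1 = c2)"

definition has_self_loop :: "edge set \<Rightarrow> bool" where
  "has_self_loop E = (\<exists>i c. ({i}, c) \<in> E)"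

definition closed_walk :: "edge set \<Rightarrow> nat list \<Rightarrow> color list \<Rightarrow> bool" where
  "closed_walk E vs cs =
     (length vs = Suc (length cs) \<and> hd vs = last vs \<and>
      (\<forall>t<length cs. ({vs ! t, vs ! Suc t}, cs ! t) \<in> E))"

definition has_odd_red_cycle :: "edge set \<Rightarrow> bool" where
  "has_odd_red_cycle E =
     (\<exists>vs cs. closed_walk E vs cs \<and> odd (length (filter (\<lambda>c. c = Red) cs)))"

end

theory Submission
  imports Defs
begin

definition pm :: "nat \<Rightarrow> nat \<Rightarrow> nat \<Rightarrow> complex \<Rightarrow> complex \<Rightarrow> complex mat" where
  "pm n a b y1 y2 = mat n n (\<lambda>(r,s). if r = a \<and> s = b then y1 else if r = b \<and> s = a then y2 else 0)"

lemma pm_carrier[simp]: "pm n a b y1 y2 \<in> carrier_mat n n"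
  unfolding pm_def by simp
lemma pm_dim[simp]: "dim_row (pm n a b y1 y2) = n" "dim_col (pm n a b y1 y2) = n"
  unfolding pm_def by simp_all
lemma pm_index[simp]: "r < n \<Longrightarrow> s < n \<Longrightarrow> pm n a b y1 y2 $$ (r,s) =
   (if r = a \<and> s = b then y1 else if r = b \<and> s = a then y2 else 0)"
  unfolding pm_def by simp

lemma sum_single2:
  assumes "finite A"
  shows "(\<Sum>k\<in>A. (if k = b then f k else 0)) = (if b \<in> A then f b else 0)"
  using assms by (simp add: sum.delta')

lemma pm_mult_left:
  assumes M: "M \<in> carrier_mat n n" and rs: "r < n" "s < n" and ab: "a < n" "b < n" "a \<noteq> b"
  shows "(pm n a b y1 y2 * M) $$ (r,s) =
     (if r = a then y1 * M$$(b,s) else if r = b then y2 * M$$(a,s) else 0)"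
proof -
  have "(pm n a b y1 y2 * M) $$ (r,s) = (\<Sum>k\<in>{0..<n}. pm n a b y1 y2 $$ (r,k) * M $$ (k,s))"
    using M rs by (simp add: scalar_prod_def)
  also have "\<dots> = (\<Sum>k\<in>{0..<n}. (if r = a \<and> k = b then y1 * M$$(k,s) else if r = b \<and> k = a then y2 * M$$(k,s) else 0))"
    using rs by (intro sum.cong) auto
  also have "\<dots> = (if r = a then y1 * M$$(b,s) else if r = b then y2 * M$$(a,s) else 0)"
  proof -
    have "\<And>k. (if r = a \<and> k = b then y1 * M$$(k,s) else if r = b \<and> k = a then y2 * M$$(k,s) else 0)
       = (if r = a then (if k = b then y1 * M$$(k,s) else 0) else if r = b then (if k = a then y2 * M$$(k,s) else 0) else 0)"
      using ab by auto
    then show ?thesis using ab by (simp add: sum.delta' if_distrib[of "\<lambda>f. sum f _"] cong: if_cong)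
  qed
  finally show ?thesis .
qed

lemma pm_mult_right:
  assumes M: "M \<in> carrier_mat n n" and rs: "r < n" "s < n" and ab: "a < n" "b < n" "a \<noteq> b"
  shows "(M * pm n a b y1 y2) $$ (r,s) =
     (if s = b then y1 * M$$(r,a) else if s = a then y2 * M$$(r,b) else 0)"
proof -
  have "(M * pm n a b y1 y2) $$ (r,s) = (\<Sum>k\<in>{0..<n}. M $$ (r,k) * pm n a b y1 y2 $$ (k,s))"
    using M rs by (simp add: scalar_prod_def)
  also have "\<dots> = (\<Sum>k\<in>{0..<n}. (if k = a \<and> s = b then y1 * M$$(r,k) else if k = b \<and> s = a then y2 * M$$(r,k) else 0))"
    using rs by (intro sum.cong) auto
  also have "\<dots> = (if s = b then y1 * M$$(r,a) else if s = a then y2 * M$$(r,b) else 0)"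
  proof -
    have "\<And>k. (if k = a \<and> s = b then y1 * M$$(r,k) else if k = b \<and> s = a then y2 * M$$(r,k) else 0)
       = (if s = b then (if k = a then y1 * M$$(r,k) else 0) else if s = a then (if k = b then y2 * M$$(r,k) else 0) else 0)"
      using ab by auto
    then show ?thesis using ab by (simp add: sum.delta' if_distrib[of "\<lambda>f. sum f _"] cong: if_cong)
  qed
  finally show ?thesis .
qed

lemma commutator_carrier[simp]: "X \<in> carrier_mat n n \<Longrightarrow> Y \<in> carrier_mat n n \<Longrightarrow> commutator X Y \<in> carrier_mat n n"
  unfolding commutator_def by auto

lemma commutator_dim[simp]: "dim_row (commutator X Y) = dim_row Y" "dim_col (commutator X Y) = dim_col X"
  unfolding commutator_def by auto

lemma comm_pm:
  assumes M: "M \<in> carrier_mat n n" and rs: "r < n" "s < n" and ab: "a < n" "b < n" "a \<noteq> b"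
  shows "commutator (pm n a b y1 y2) M $$ (r,s) =
     (if r = a then y1 * M$$(b,s) else if r = b then y2 * M$$(a,s) else 0) -
     (if s = b then y1 * M$$(r,a) else if s = a then y2 * M$$(r,b) else 0)"
proof -
  have "commutator (pm n a b y1 y2) M $$ (r,s) = (pm n a b y1 y2 * M) $$ (r,s) - (M * pm n a b y1 y2) $$ (r,s)"
    unfolding commutator_def using M rs by (subst index_minus_mat) auto
  then show ?thesis by (simp only: pm_mult_left[OF assms] pm_mult_right[OF assms])
qed

definition TT :: "complex mat \<Rightarrow> complex mat \<Rightarrow> complex mat" where
  "TT Y M = commutator Y (commutator Y M)"

definition yy1 :: "bool \<Rightarrow> complex" where "yy1 c = (if c then \<i> else 1)"
definition yy2 :: "bool \<Rightarrow> complex" where "yy2 c = (if c then \<i> else -1)"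
definition eps :: "bool \<Rightarrow> complex" where "eps c = (if c then -1 else 1)"

lemma TT_carrier[simp]: "M \<in> carrier_mat n n \<Longrightarrow> TT (pm n a b y1 y2) M \<in> carrier_mat n n"
  unfolding TT_def by simp

lemma TT_pm:
  assumes M: "M \<in> carrier_mat n n" and rs: "r < n" "s < n" and ab: "a < n" "b < n" "a \<noteq> b"
  shows "TT (pm n a b (yy1 c) (yy2 c)) M $$ (r,s) =
    (if r = a \<and> s = a then -2 * M$$(a,a) + 2 * M$$(b,b)
     else if r = b \<and> s = b then -2 * M$$(b,b) + 2 * M$$(a,a)
     else if r = a \<and> s = b then -2 * M$$(a,b) - 2 * eps c * M$$(b,a)
     else if r = b \<and> s = a then -2 * M$$(b,a) - 2 * eps c * M$$(a,b)
     else if r = a \<or> r = b \<or> s = a \<or> s = b then - M$$(r,s) else 0)"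
proof -
  define y1 where "y1 = yy1 c"
  define y2 where "y2 = yy2 c"
  define C where "C = commutator (pm n a b y1 y2) M"
  have Cc: "C \<in> carrier_mat n n" using M by (simp add: C_def)
  have e: "TT (pm n a b y1 y2) M $$ (r,s) =
     (if r = a then y1 * C$$(b,s) else if r = b then y2 * C$$(a,s) else 0) -
     (if s = b then y1 * C$$(r,a) else if s = a then y2 * C$$(r,b) else 0)"
    unfolding TT_def C_def[symmetric] by (rule comm_pm[OF Cc rs ab])
  have cm: "\<And>x z. x < n \<Longrightarrow> z < n \<Longrightarrow> C $$ (x,z) =
     (if x = a then y1 * M$$(b,z) else if x = b then y2 * M$$(a,z) else 0) -
     (if z = b then y1 * M$$(x,a) else if z = a then y2 * M$$(x,b) else 0)"
    unfolding C_def by (rule comm_pm[OF M _ _ ab])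
  have yv: "\<And>x. y1 * (y2 * x) = - x" "\<And>x. y2 * (y1 * x) = - x"
      "\<And>x. y1 * (y1 * x) = eps c * x" "\<And>x. y2 * (y2 * x) = eps c * x"
    by (cases c; simp add: y1_def y2_def yy1_def yy2_def eps_def)+
  have ba: "b \<noteq> a" using ab by simp
  have caa: "C $$ (a,a) = y1 * M$$(b,a) - y2 * M$$(a,b)" using cm[of a a] ab ba by simp
  have cbb: "C $$ (b,b) = y2 * M$$(a,b) - y1 * M$$(b,a)" using cm[of b b] ab ba by simp
  have cab: "C $$ (a,b) = y1 * M$$(b,b) - y1 * M$$(a,a)" using cm[of a b] ab ba by simp
  have cba: "C $$ (b,a) = y2 * M$$(a,a) - y2 * M$$(b,b)" using cm[of b a] ab ba by simp
  have "TT (pm n a b y1 y2) M $$ (r,s) =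
    (if r = a \<and> s = a then -2 * M$$(a,a) + 2 * M$$(b,b)
     else if r = b \<and> s = b then -2 * M$$(b,b) + 2 * M$$(a,a)
     else if r = a \<and> s = b then -2 * M$$(a,b) - 2 * eps c * M$$(b,a)
     else if r = b \<and> s = a then -2 * M$$(b,a) - 2 * eps c * M$$(a,b)
     else if r = a \<or> r = b \<or> s = a \<or> s = b then - M$$(r,s) else 0)"
  proof -
    consider "r = a" "s = a" | "r = a" "s = b" | "r = a" "s \<noteq> a" "s \<noteq> b"
      | "r = b" "s = a" | "r = b" "s = b" | "r = b" "s \<noteq> a" "s \<noteq> b"
      | "r \<noteq> a" "r \<noteq> b" "s = a" | "r \<noteq> a" "r \<noteq> b" "s = b"
      | "r \<noteq> a" "r \<noteq> b" "s \<noteq> a" "s \<noteq> b" by blast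
    then show ?thesis
    proof cases
      case 1
      then have "TT (pm n a b y1 y2) M $$ (r,s) = y1 * C$$(b,a) - y2 * C$$(a,b)" using e ba by simp
      also have "\<dots> = -2 * M$$(a,a) + 2 * M$$(b,b)" unfolding cab cba by (simp add: right_diff_distrib yv)
      finally show ?thesis using 1 by simp
    next
      case 2
      then have "TT (pm n a b y1 y2) M $$ (r,s) = y1 * C$$(b,b) - y1 * C$$(a,a)" using e ba by simp
      also have "\<dots> = -2 * M$$(a,b) - 2 * eps c * M$$(b,a)" unfolding caa cbb by (simp add: right_diff_distrib yv)
      finally show ?thesis using 2 ba by simp
    next
      case 3
      have "C $$ (b,s) = y2 * M$$(a,s)" using cm[of b s] ab ba 3 rs by simp
      then have "TT (pm n a b y1 y2) M $$ (r,s) = y1 * (y2 * M$$(a,s))" using e ba 3 by simp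
      also have "\<dots> = - M$$(r,s)" using 3 by (simp add: yv)
      finally show ?thesis using 3 ba by simp
    next
      case 4
      then have "TT (pm n a b y1 y2) M $$ (r,s) = y2 * C$$(a,a) - y2 * C$$(b,b)" using e ba by simp
      also have "\<dots> = -2 * M$$(b,a) - 2 * eps c * M$$(a,b)" unfolding caa cbb by (simp add: right_diff_distrib yv)
      finally show ?thesis using 4 ba by simp
    next
      case 5
      then have "TT (pm n a b y1 y2) M $$ (r,s) = y2 * C$$(a,b) - y1 * C$$(b,a)" using e ba by simp
      also have "\<dots> = -2 * M$$(b,b) + 2 * M$$(a,a)" unfolding cab cba by (simp add: right_diff_distrib yv)
      finally show ?thesis using 5 ba by simp
    next
      case 6
      have "C $$ (a,s) = y1 * M$$(b,s)" using cm[of a s] ab ba 6 rs by simp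
      then have "TT (pm n a b y1 y2) M $$ (r,s) = y2 * (y1 * M$$(b,s))" using e ba 6 by simp
      also have "\<dots> = - M$$(r,s)" using 6 by (simp add: yv)
      finally show ?thesis using 6 ba by simp
    next
      case 7
      have "C $$ (r,b) = - (y1 * M$$(r,a))" using cm[of r b] ab ba 7 rs by simp
      then have "TT (pm n a b y1 y2) M $$ (r,s) = - (y2 * (- (y1 * M$$(r,a))))" using e ba 7 by simp
      also have "\<dots> = - M$$(r,s)" using 7 by (simp add: yv)
      finally show ?thesis using 7 ba by simp
    next
      case 8
      have "C $$ (r,a) = - (y2 * M$$(r,b))" using cm[of r a] ab ba 8 rs by simp
      then have "TT (pm n a b y1 y2) M $$ (r,s) = - (y1 * (- (y2 * M$$(r,b))))" using e ba 8 by simp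
      also have "\<dots> = - M$$(r,s)" using 8 by (simp add: yv)
      finally show ?thesis using 8 ba by simp
    next
      case 9
      then show ?thesis using e by simp
    qed
  qed
  then show ?thesis by (simp add: y1_def y2_def)
qed

definition gel :: "nat \<Rightarrow> bool \<Rightarrow> nat \<Rightarrow> nat \<Rightarrow> complex mat" where
  "gel n c a b = pm n a b (yy1 c) (yy2 c)"

lemma gel_carrier[simp]: "gel n c a b \<in> carrier_mat n n"
  unfolding gel_def by simp
lemma gel_dim[simp]: "dim_row (gel n c a b) = n" "dim_col (gel n c a b) = n"
  unfolding gel_def by simp_all

lemma gel_index: "r < n \<Longrightarrow> s < n \<Longrightarrow> gel n c a b $$ (r,s) =
   (if r = a \<and> s = b then yy1 c else if r = b \<and> s = a then yy2 c else 0)"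
  unfolding gel_def by simp

lemma comm_gel:
  assumes M: "M \<in> carrier_mat n n" and rs: "r < n" "s < n" and ab: "a < n" "b < n" "a \<noteq> b"
  shows "commutator (gel n c a b) M $$ (r,s) =
     (if r = a then yy1 c * M$$(b,s) else if r = b then yy2 c * M$$(a,s) else 0) -
     (if s = b then yy1 c * M$$(r,a) else if s = a then yy2 c * M$$(r,b) else 0)"
  unfolding gel_def by (rule comm_pm[OF assms])

lemma yy_prods:
  "yy1 c1 * yy1 c2 = complex_of_real (if c1 \<and> c2 then -1 else 1) * yy1 (c1 \<noteq> c2)"
  "- (yy2 c1 * yy2 c2) = complex_of_real (if c1 \<and> c2 then -1 else 1) * yy2 (c1 \<noteq> c2)"
  by (cases c1; cases c2; simp add: yy1_def yy2_def)+

lemma bracket_gel: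
  assumes uvw: "u < n" "v < n" "w < n" "u \<noteq> v" "v \<noteq> w" "u \<noteq> w"
  shows "commutator (gel n c1 u v) (gel n c2 v w) =
     complex_of_real (if c1 \<and> c2 then -1 else 1) \<cdot>\<^sub>m gel n (c1 \<noteq> c2) u w"
proof (rule eq_matI)
  fix r s assume rs: "r < dim_row (complex_of_real (if c1 \<and> c2 then -1 else 1) \<cdot>\<^sub>m gel n (c1 \<noteq> c2) u w)"
     "s < dim_col (complex_of_real (if c1 \<and> c2 then -1 else 1) \<cdot>\<^sub>m gel n (c1 \<noteq> c2) u w)"
  then have rs': "r < n" "s < n" by simp_all
  have e: "\<And>x y. x < n \<Longrightarrow> y < n \<Longrightarrow> gel n c2 v w $$ (x,y) =
   (if x = v \<and> y = w then yy1 c2 else if x = w \<and> y = v then yy2 c2 else 0)"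
    by (rule gel_index)
  have L: "commutator (gel n c1 u v) (gel n c2 v w) $$ (r, s) =
     (if r = u then yy1 c1 * gel n c2 v w$$(v,s) else if r = v then yy2 c1 * gel n c2 v w$$(u,s) else 0) -
     (if s = v then yy1 c1 * gel n c2 v w$$(r,u) else if s = u then yy2 c1 * gel n c2 v w$$(r,v) else 0)"
    by (rule comm_gel[OF _ rs' uvw(1,2,4)]) simp
  have R: "(complex_of_real (if c1 \<and> c2 then -1 else 1) \<cdot>\<^sub>m gel n (c1 \<noteq> c2) u w) $$ (r, s) =
     complex_of_real (if c1 \<and> c2 then -1 else 1) * (if r = u \<and> s = w then yy1 (c1 \<noteq> c2) else if r = w \<and> s = u then yy2 (c1 \<noteq> c2) else 0)"
    using rs' by (simp add: gel_index)
  have ev: "gel n c2 v w$$(v,s) = (if s = w then yy1 c2 else 0)"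
           "gel n c2 v w$$(u,s) = 0"
           "gel n c2 v w$$(r,u) = 0"
           "gel n c2 v w$$(r,v) = (if r = w then yy2 c2 else 0)"
    using uvw rs' by (auto simp: e)
  show "commutator (gel n c1 u v) (gel n c2 v w) $$ (r, s) =
     (complex_of_real (if c1 \<and> c2 then -1 else 1) \<cdot>\<^sub>m gel n (c1 \<noteq> c2) u w) $$ (r, s)"
    unfolding L R ev using uvw yy_prods[of c1 c2]
    by (cases "r = u"; cases "r = w"; cases "s = u"; cases "s = w") simp_all
qed auto

lemma gel_swap:
  assumes "a < n" "b < n" "a \<noteq> b"
  shows "gel n c b a = complex_of_real (if c then 1 else -1) \<cdot>\<^sub>m gel n c a b"
proof (rule eq_matI)
  fix r s assume "r < dim_row (complex_of_real (if c then 1 else -1) \<cdot>\<^sub>m gel n c a b)"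
    "s < dim_col (complex_of_real (if c then 1 else -1) \<cdot>\<^sub>m gel n c a b)"
  then have rs: "r < n" "s < n" by auto
  have e1: "gel n c b a $$ (r, s) = (if r = b \<and> s = a then yy1 c else if r = a \<and> s = b then yy2 c else 0)"
    using rs by (rule gel_index)
  have e2: "(complex_of_real (if c then 1 else -1) \<cdot>\<^sub>m gel n c a b) $$ (r, s) =
      complex_of_real (if c then 1 else -1) * (if r = a \<and> s = b then yy1 c else if r = b \<and> s = a then yy2 c else 0)"
    using rs by (simp only: index_smult_mat gel_dim gel_index)
  show "gel n c b a $$ (r, s) = (complex_of_real (if c then 1 else -1) \<cdot>\<^sub>m gel n c a b) $$ (r, s)"
    unfolding e1 e2 using assms(3) by (cases c) (auto simp: yy1_def yy2_def)
qed auto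

section \<open>Closure properties of lie_gen\<close>

lemma lg_carrier: "x \<in> lie_gen n X \<Longrightarrow> x \<in> carrier_mat n n"
  by (induction rule: lie_gen.induct) auto

lemma lg_smult: "x \<in> lie_gen n X \<Longrightarrow> complex_of_real r \<cdot>\<^sub>m x \<in> lie_gen n X"
  by (rule lie_gen.smult)

lemma smult_smult_mat: "(a::complex) \<cdot>\<^sub>m (b \<cdot>\<^sub>m A) = (a * b) \<cdot>\<^sub>m A"
  by (rule eq_matI) auto

lemma lg_unsmult:
  assumes "r \<noteq> 0" "complex_of_real r \<cdot>\<^sub>m x \<in> lie_gen n X" "x \<in> carrier_mat n n"
  shows "x \<in> lie_gen n X"
proof -
  have "complex_of_real (1/r) \<cdot>\<^sub>m (complex_of_real r \<cdot>\<^sub>m x) \<in> lie_gen n X"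
    using assms(2) by (rule lie_gen.smult)
  also have "complex_of_real (1/r) \<cdot>\<^sub>m (complex_of_real r \<cdot>\<^sub>m x) = x"
  proof -
    have "complex_of_real (1/r) * complex_of_real r = 1" using assms(1) by simp
    then show ?thesis unfolding smult_smult_mat using assms(3) by (intro eq_matI) auto
  qed
  finally show ?thesis .
qed

lemma lg_comb:
  assumes "x \<in> lie_gen n X" "y \<in> lie_gen n X"
  shows "complex_of_real \<alpha> \<cdot>\<^sub>m x + complex_of_real \<beta> \<cdot>\<^sub>m y \<in> lie_gen n X"
  using assms by (intro lie_gen.add lie_gen.smult)

lemma lg_bracket_gel:
  assumes "gel n c1 u v \<in> lie_gen n X" "gel n c2 v w \<in> lie_gen n X"
    "u < n" "v < n" "w < n" "u \<noteq> v" "v \<noteq> w" "u \<noteq> w"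
  shows "gel n (c1 \<noteq> c2) u w \<in> lie_gen n X"
proof -
  have "commutator (gel n c1 u v) (gel n c2 v w) \<in> lie_gen n X"
    using assms by (intro lie_gen.bracket)
  then have "complex_of_real (if c1 \<and> c2 then -1 else 1) \<cdot>\<^sub>m gel n (c1 \<noteq> c2) u w \<in> lie_gen n X"
    using bracket_gel[OF assms(3-8)] by simp
  then show ?thesis by (rule lg_unsmult[rotated]) auto
qed

lemma lg_gel_swap:
  assumes "gel n c a b \<in> lie_gen n X" "a < n" "b < n" "a \<noteq> b"
  shows "gel n c b a \<in> lie_gen n X"
  using lie_gen.smult[OF assms(1)] gel_swap[OF assms(2,3,4)] by metis

lemma TT_gel:
  assumes M: "M \<in> carrier_mat n n" and rs: "r < n" "s < n" and ab: "a < n" "b < n" "a \<noteq> b"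
  shows "TT (gel n c a b) M $$ (r,s) =
    (if r = a \<and> s = a then -2 * M$$(a,a) + 2 * M$$(b,b)
     else if r = b \<and> s = b then -2 * M$$(b,b) + 2 * M$$(a,a)
     else if r = a \<and> s = b then -2 * M$$(a,b) - 2 * eps c * M$$(b,a)
     else if r = b \<and> s = a then -2 * M$$(b,a) - 2 * eps c * M$$(a,b)
     else if r = a \<or> r = b \<or> s = a \<or> s = b then - M$$(r,s) else 0)"
  unfolding gel_def by (rule TT_pm[OF assms])

lemma TT_gel_carrier[simp]: "M \<in> carrier_mat n n \<Longrightarrow> TT (gel n c a b) M \<in> carrier_mat n n"
  unfolding gel_def by simp

lemma TT_sel:
  assumes M: "M \<in> carrier_mat n n" and rs: "r < n" "s < n" and ab: "a < n" "b < n" "a \<noteq> b"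
    and z: "M$$(a,a) = 0" "M$$(b,b) = 0" "M$$(a,b) = 0" "M$$(b,a) = 0"
  shows "TT (gel n c a b) M $$ (r,s) = (if (r = a \<or> r = b) \<noteq> (s = a \<or> s = b) then - M$$(r,s) else 0)"
  unfolding TT_gel[OF assms(1-6)] using z ab by auto

lemma TT_kill:
  assumes M: "M \<in> carrier_mat n n" and rs: "r < n" "s < n" and ab: "a < n" "b < n" "a \<noteq> b"
    and z: "M$$(a,a) = 0" "M$$(b,b) = 0" "M$$(a,b) = 0" "M$$(b,a) = 0"
  shows "(M + TT (gel n c a b) M) $$ (r,s) = (if r \<noteq> a \<and> r \<noteq> b \<and> s \<noteq> a \<and> s \<noteq> b then M$$(r,s) else 0)"
proof -
  have Tc: "TT (gel n c a b) M \<in> carrier_mat n n" using M by simp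
  have "(M + TT (gel n c a b) M) $$ (r,s) = M$$(r,s) + TT (gel n c a b) M $$ (r,s)"
    using rs Tc by (subst index_add_mat) auto
  also have "\<dots> = (if r \<noteq> a \<and> r \<noteq> b \<and> s \<noteq> a \<and> s \<noteq> b then M$$(r,s) else 0)"
    unfolding TT_sel[OF assms] using z by auto
  finally show ?thesis .
qed

lemma lg_TT: "Y \<in> lie_gen n X \<Longrightarrow> M \<in> lie_gen n X \<Longrightarrow> TT Y M \<in> lie_gen n X"
  unfolding TT_def by (intro lie_gen.bracket)

section \<open>Isolation of an entry\<close>

lemma isolate:
  fixes c1 c2 c3 c4 :: bool
  assumes A: "A \<in> carrier_mat n n"
    and idx: "k < n" "k' < n" "m < n" "l < n" "l' < n" "p < n"
    and d1: "k \<noteq> k'" "k \<noteq> m" "k' \<noteq> m" "l \<noteq> l'" "l \<noteq> p" "l' \<noteq> p"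
    and d2: "k \<noteq> l" "k \<noteq> l'" "k \<noteq> p" "k' \<noteq> l" "k' \<noteq> l'" "k' \<noteq> p" "m \<noteq> l" "m \<noteq> l'" "m \<noteq> p"
  defines "N \<equiv> TT (gel n c1 k k') A"
  defines "M1 \<equiv> TT (gel n c2 l l') N"
  defines "M2 \<equiv> M1 + TT (gel n c3 k' m) M1"
  defines "M3 \<equiv> M2 + TT (gel n c4 l' p) M2"
  shows "M3 = mat n n (\<lambda>(r,s). if (r = k \<and> s = l) \<or> (r = l \<and> s = k) then A$$(r,s) else 0)"
proof -
  have Nc: "N \<in> carrier_mat n n" unfolding N_def using A by simp
  have M1c: "M1 \<in> carrier_mat n n" unfolding M1_def using Nc by simp
  have M2c: "M2 \<in> carrier_mat n n" unfolding M2_def using M1c by simp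
  have Nv: "N $$ (r,s) = (if r \<in> {l,l'} \<and> s \<in> {k,k'} \<or> r \<in> {k,k'} \<and> s \<in> {l,l'} then - A$$(r,s) else N $$ (r,s))"
    if "r < n" "s < n" for r s
    unfolding N_def TT_gel[OF A that idx(1,2) d1(1)] using d1 d2 by auto
  have Nz: "N $$ (r,s) = 0" if "r \<in> {l,l'}" "s \<in> {l,l'}" "r < n" "s < n" for r s
    unfolding N_def TT_gel[OF A that(3,4) idx(1,2) d1(1)] using d1 d2 that by auto
  have M1v: "M1 $$ (r,s) = (if r \<in> {l,l'} \<and> s \<in> {k,k'} \<or> r \<in> {k,k'} \<and> s \<in> {l,l'} then A$$(r,s) else 0)"
    if rs: "r < n" "s < n" for r s
  proof -
    have "M1 $$ (r,s) = (if (r = l \<or> r = l') \<noteq> (s = l \<or> s = l') then - N$$(r,s) else 0)"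
      unfolding M1_def by (rule TT_sel[OF Nc rs idx(4,5) d1(4)]) (auto intro: Nz simp: idx)
    also have "\<dots> = (if r \<in> {l,l'} \<and> s \<in> {k,k'} \<or> r \<in> {k,k'} \<and> s \<in> {l,l'} then A$$(r,s) else 0)"
    proof (cases "(r = l \<or> r = l') \<noteq> (s = l \<or> s = l')")
      case True
      then have "N $$ (r,s) = (if r \<in> {l,l'} \<and> s \<in> {k,k'} \<or> r \<in> {k,k'} \<and> s \<in> {l,l'} then - A$$(r,s) else 0)"
        unfolding N_def TT_gel[OF A rs idx(1,2) d1(1)] using d1 d2 by auto
      then show ?thesis using True d1 d2 by auto
    next
      case False
      then show ?thesis using d1 d2 by auto
    qed
    finally show ?thesis .
  qed
  have M2v: "M2 $$ (r,s) = (if r \<in> {l,l'} \<and> s = k \<or> r = k \<and> s \<in> {l,l'} then A$$(r,s) else 0)"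
    if rs: "r < n" "s < n" for r s
  proof -
    have "M2 $$ (r,s) = (if r \<noteq> k' \<and> r \<noteq> m \<and> s \<noteq> k' \<and> s \<noteq> m then M1$$(r,s) else 0)"
      unfolding M2_def
      by (rule TT_kill[OF M1c rs idx(2,3) d1(3)]) (use M1v idx d1 d2 in auto)
    then show ?thesis using M1v[OF rs] d1 d2 by auto
  qed
  have M3v: "M3 $$ (r,s) = (if r = l \<and> s = k \<or> r = k \<and> s = l then A$$(r,s) else 0)"
    if rs: "r < n" "s < n" for r s
  proof -
    have "M3 $$ (r,s) = (if r \<noteq> l' \<and> r \<noteq> p \<and> s \<noteq> l' \<and> s \<noteq> p then M2$$(r,s) else 0)"
      unfolding M3_def
      by (rule TT_kill[OF M2c rs idx(5,6) d1(6)]) (use M2v idx d1 d2 in auto)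
    then show ?thesis using M2v[OF rs] d1 d2 by auto
  qed
  have M3c: "M3 \<in> carrier_mat n n" unfolding M3_def using M2c by simp
  show ?thesis
    by (rule eq_matI) (use M3v M3c in auto)
qed

lemma eps_sq: "eps c * eps c = 1" by (cases c) (simp_all add: eps_def)

lemma W_entries:
  assumes M: "M \<in> carrier_mat n n" and rs: "r < n" "s < n" and ab: "a < n" "b < n" "a \<noteq> b"
  shows "(TT (gel n c a b) M + TT (gel n c a b) (TT (gel n c a b) M)) $$ (r,s) =
    (if r = a \<and> s = a then 6 * M$$(a,a) - 6 * M$$(b,b)
     else if r = b \<and> s = b then 6 * M$$(b,b) - 6 * M$$(a,a)
     else if r = a \<and> s = b then 6 * M$$(a,b) + 6 * eps c * M$$(b,a)
     else if r = b \<and> s = a then 6 * M$$(b,a) + 6 * eps c * M$$(a,b)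
     else 0)"
proof -
  define Z where "Z = TT (gel n c a b) M"
  have Zc: "Z \<in> carrier_mat n n" unfolding Z_def using M by simp
  have TZc: "TT (gel n c a b) Z \<in> carrier_mat n n" using Zc by simp
  have Zv: "\<And>x y. x < n \<Longrightarrow> y < n \<Longrightarrow> Z $$ (x,y) =
    (if x = a \<and> y = a then -2 * M$$(a,a) + 2 * M$$(b,b)
     else if x = b \<and> y = b then -2 * M$$(b,b) + 2 * M$$(a,a)
     else if x = a \<and> y = b then -2 * M$$(a,b) - 2 * eps c * M$$(b,a)
     else if x = b \<and> y = a then -2 * M$$(b,a) - 2 * eps c * M$$(a,b)
     else if x = a \<or> x = b \<or> y = a \<or> y = b then - M$$(x,y) else 0)"
    unfolding Z_def by (rule TT_gel[OF M _ _ ab])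
  have e: "(Z + TT (gel n c a b) Z) $$ (r,s) = Z $$ (r,s) +
    (if r = a \<and> s = a then -2 * Z$$(a,a) + 2 * Z$$(b,b)
     else if r = b \<and> s = b then -2 * Z$$(b,b) + 2 * Z$$(a,a)
     else if r = a \<and> s = b then -2 * Z$$(a,b) - 2 * eps c * Z$$(b,a)
     else if r = b \<and> s = a then -2 * Z$$(b,a) - 2 * eps c * Z$$(a,b)
     else if r = a \<or> r = b \<or> s = a \<or> s = b then - Z$$(r,s) else 0)"
    using rs TZc by (subst index_add_mat) (auto simp: TT_gel[OF Zc rs ab])
  have ba: "b \<noteq> a" using ab by simp
  have zaa: "Z$$(a,a) = -2 * M$$(a,a) + 2 * M$$(b,b)" using Zv[of a a] ab by simp
  have zbb: "Z$$(b,b) = -2 * M$$(b,b) + 2 * M$$(a,a)" using Zv[of b b] ab ba by simp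
  have zab: "Z$$(a,b) = -2 * M$$(a,b) - 2 * eps c * M$$(b,a)" using Zv[of a b] ab by simp
  have zba: "Z$$(b,a) = -2 * M$$(b,a) - 2 * eps c * M$$(a,b)" using Zv[of b a] ab ba by simp
  have ee: "\<And>x. eps c * (eps c * x) = x" by (simp add: mult.assoc[symmetric] eps_sq)
  show ?thesis
    unfolding Z_def[symmetric] e
  proof -
    consider "r = a" "s = a" | "r = b" "s = b" | "r = a" "s = b" | "r = b" "s = a"
      | "\<not> ((r = a \<or> r = b) \<and> (s = a \<or> s = b))" by blast
    then show "Z $$ (r,s) +
    (if r = a \<and> s = a then -2 * Z$$(a,a) + 2 * Z$$(b,b)
     else if r = b \<and> s = b then -2 * Z$$(b,b) + 2 * Z$$(a,a)
     else if r = a \<and> s = b then -2 * Z$$(a,b) - 2 * eps c * Z$$(b,a)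
     else if r = b \<and> s = a then -2 * Z$$(b,a) - 2 * eps c * Z$$(a,b)
     else if r = a \<or> r = b \<or> s = a \<or> s = b then - Z$$(r,s) else 0) =
    (if r = a \<and> s = a then 6 * M$$(a,a) - 6 * M$$(b,b)
     else if r = b \<and> s = b then 6 * M$$(b,b) - 6 * M$$(a,a)
     else if r = a \<and> s = b then 6 * M$$(a,b) + 6 * eps c * M$$(b,a)
     else if r = b \<and> s = a then 6 * M$$(b,a) + 6 * eps c * M$$(a,b)
     else 0)"
    proof cases
      case 1 then show ?thesis using ab ba by (simp add: zaa zbb algebra_simps)
    next
      case 2 then show ?thesis using ab ba by (simp add: zaa zbb algebra_simps)
    next
      case 3 then show ?thesis using ab ba by (simp add: zab zba algebra_simps ee)
    next
      case 4 then show ?thesis using ab ba by (simp add: zab zba algebra_simps ee)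
    next
      case 5
      have n4: "(r = a \<and> s = a) = False" "(r = b \<and> s = b) = False" "(r = a \<and> s = b) = False" "(r = b \<and> s = a) = False"
        using 5 by blast+
      have "Z $$ (r,s) = (if r = a \<or> r = b \<or> s = a \<or> s = b then - M$$(r,s) else 0)"
        unfolding Zv[OF rs] n4 if_False ..
      then show ?thesis unfolding n4 if_False by simp
    qed
  qed
qed

lemma full_pair:
  assumes Y: "gel n c a b \<in> lie_gen n X" and HM: "M \<in> lie_gen n X"
    and ab: "a < n" "b < n" "a \<noteq> b"
    and sk: "M$$(b,a) = - cnj (M$$(a,b))" "Re (M$$(a,a)) = 0" "Re (M$$(b,b)) = 0"
    and nz: "Im (M$$(a,a)) \<noteq> Im (M$$(b,b)) \<or> (if c then Re (M$$(a,b)) else Im (M$$(a,b))) \<noteq> 0"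
  shows "gel n (\<not> c) a b \<in> lie_gen n X"
proof -
  have Mc: "M \<in> carrier_mat n n" using HM by (rule lg_carrier)
  define W where "W = TT (gel n c a b) M + TT (gel n c a b) (TT (gel n c a b) M)"
  have WL: "W \<in> lie_gen n X" unfolding W_def using Y HM by (intro lie_gen.add lg_TT)
  have Wc: "W \<in> carrier_mat n n" using WL by (rule lg_carrier)
  define V where "V = commutator (gel n c a b) W"
  have VL: "V \<in> lie_gen n X" unfolding V_def using Y WL by (intro lie_gen.bracket)
  have Vc: "V \<in> carrier_mat n n" using VL by (rule lg_carrier)
  define u where "u = Im (M$$(a,a))"
  define v where "v = Im (M$$(b,b))"
  define x where "x = Re (M$$(a,b))"
  define y where "y = Im (M$$(a,b))"
  define \<delta> where "\<delta> = 6 * (u - v)"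
  define \<pi> where "\<pi> = 12 * (if c then x else y)"
  define \<kappa> where "\<kappa> = (if c then \<delta> / 2 else - \<delta> / 2)"
  have maa: "M$$(a,a) = Complex 0 u" using sk(2) unfolding u_def by (simp add: complex_eq_iff)
  have mbb: "M$$(b,b) = Complex 0 v" using sk(3) unfolding v_def by (simp add: complex_eq_iff)
  have mab: "M$$(a,b) = Complex x y" unfolding x_def y_def by (simp add: complex_eq_iff)
  have mba: "M$$(b,a) = Complex (-x) y" using sk(1) unfolding x_def y_def by (simp add: complex_eq_iff)
  have Wv: "W $$ (r,s) =
    (if r = a \<and> s = a then 6 * M$$(a,a) - 6 * M$$(b,b)
     else if r = b \<and> s = b then 6 * M$$(b,b) - 6 * M$$(a,a)
     else if r = a \<and> s = b then 6 * M$$(a,b) + 6 * eps c * M$$(b,a)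
     else if r = b \<and> s = a then 6 * M$$(b,a) + 6 * eps c * M$$(a,b)
     else 0)" if "r < n" "s < n" for r s
    unfolding W_def by (rule W_entries[OF Mc that ab])
  have ba: "b \<noteq> a" using ab by simp
  have waa: "W $$ (a,a) = Complex 0 \<delta>" using Wv[of a a] ab unfolding maa mbb \<delta>_def by (simp add: complex_eq_iff)
  have wbb: "W $$ (b,b) = Complex 0 (-\<delta>)" using Wv[of b b] ab ba unfolding maa mbb \<delta>_def by (simp add: complex_eq_iff)
  have wab: "W $$ (a,b) = (if c then Complex \<pi> 0 else Complex 0 \<pi>)"
    using Wv[of a b] ab ba unfolding mab mba \<pi>_def by (cases c) (simp_all add: complex_eq_iff eps_def)
  have wba: "W $$ (b,a) = (if c then Complex (-\<pi>) 0 else Complex 0 \<pi>)"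
    using Wv[of b a] ab ba unfolding mab mba \<pi>_def by (cases c) (simp_all add: complex_eq_iff eps_def)
  have w0: "W $$ (r,s) = 0" if "r < n" "s < n" "\<not> ((r = a \<or> r = b) \<and> (s = a \<or> s = b))" for r s
  proof -
    have n4: "(r = a \<and> s = a) = False" "(r = b \<and> s = b) = False" "(r = a \<and> s = b) = False" "(r = b \<and> s = a) = False"
      using that(3) by blast+
    show ?thesis unfolding Wv[OF that(1,2)] n4 if_False ..
  qed
  have key: "complex_of_real \<pi> \<cdot>\<^sub>m W + complex_of_real \<kappa> \<cdot>\<^sub>m V = complex_of_real (\<pi>^2 + \<delta>^2) \<cdot>\<^sub>m gel n (\<not> c) a b"
  proof (rule eq_matI)
    fix r s assume "r < dim_row (complex_of_real (\<pi>^2 + \<delta>^2) \<cdot>\<^sub>m gel n (\<not> c) a b)"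
      "s < dim_col (complex_of_real (\<pi>^2 + \<delta>^2) \<cdot>\<^sub>m gel n (\<not> c) a b)"
    then have rs: "r < n" "s < n" by auto
    have L: "(complex_of_real \<pi> \<cdot>\<^sub>m W + complex_of_real \<kappa> \<cdot>\<^sub>m V) $$ (r,s) =
      complex_of_real \<pi> * W $$ (r,s) + complex_of_real \<kappa> *
       ((if r = a then yy1 c * W$$(b,s) else if r = b then yy2 c * W$$(a,s) else 0) -
        (if s = b then yy1 c * W$$(r,a) else if s = a then yy2 c * W$$(r,b) else 0))"
      using rs Wc Vc unfolding V_def by (simp add: comm_gel[OF Wc rs ab])
    have R: "(complex_of_real (\<pi>^2 + \<delta>^2) \<cdot>\<^sub>m gel n (\<not> c) a b) $$ (r,s) =
      complex_of_real (\<pi>^2 + \<delta>^2) * (if r = a \<and> s = b then yy1 (\<not> c) else if r = b \<and> s = a then yy2 (\<not> c) else 0)"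
      using rs by (simp add: gel_index)
    consider "r = a" "s = a" | "r = b" "s = b" | "r = a" "s = b" | "r = b" "s = a"
      | "r = a" "s \<noteq> a" "s \<noteq> b" | "r = b" "s \<noteq> a" "s \<noteq> b"
      | "r \<noteq> a" "r \<noteq> b" "s = a" | "r \<noteq> a" "r \<noteq> b" "s = b"
      | "r \<noteq> a" "r \<noteq> b" "s \<noteq> a" "s \<noteq> b" by blast
    then show "(complex_of_real \<pi> \<cdot>\<^sub>m W + complex_of_real \<kappa> \<cdot>\<^sub>m V) $$ (r,s) =
       (complex_of_real (\<pi>^2 + \<delta>^2) \<cdot>\<^sub>m gel n (\<not> c) a b) $$ (r,s)"
    proof cases
      case 1 then show ?thesis using ba unfolding L R
        by (cases c) (simp_all add: waa wbb wab wba \<kappa>_def complex_eq_iff yy1_def yy2_def algebra_simps)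
    next
      case 2 then show ?thesis using ba unfolding L R
        by (cases c) (simp_all add: waa wbb wab wba \<kappa>_def complex_eq_iff yy1_def yy2_def algebra_simps)
    next
      case 3 then show ?thesis using ba unfolding L R
        by (cases c) (simp_all add: waa wbb wab wba \<kappa>_def complex_eq_iff yy1_def yy2_def algebra_simps power2_eq_square)
    next
      case 4 then show ?thesis using ba unfolding L R
        by (cases c) (simp_all add: waa wbb wab wba \<kappa>_def complex_eq_iff yy1_def yy2_def algebra_simps power2_eq_square)
    next
      case 5 then show ?thesis unfolding L R using ba w0[OF ab(2) rs(2)] w0[OF rs ] by simp
    next
      case 6 then show ?thesis unfolding L R using ba w0[OF ab(1) rs(2)] w0[OF rs ] by simp
    next
      case 7 then show ?thesis unfolding L R using ba w0[OF rs(1) ab(2)] w0[OF rs ] by simp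
    next
      case 8 then show ?thesis unfolding L R using ba w0[OF rs(1) ab(1)] w0[OF rs ] by simp
    next
      case 9 then show ?thesis unfolding L R using w0[OF rs] by simp
    qed
  qed (use Wc Vc in auto)
  have "complex_of_real \<pi> \<cdot>\<^sub>m W + complex_of_real \<kappa> \<cdot>\<^sub>m V \<in> lie_gen n X"
    using WL VL by (rule lg_comb)
  then have "complex_of_real (\<pi>^2 + \<delta>^2) \<cdot>\<^sub>m gel n (\<not> c) a b \<in> lie_gen n X" unfolding key .
  moreover have "\<pi>^2 + \<delta>^2 \<noteq> 0"
  proof
    assume "\<pi>^2 + \<delta>^2 = 0"
    then have "\<pi> = 0" "\<delta> = 0" by (simp_all add: sum_power2_eq_zero_iff)
    then show False using nz unfolding \<pi>_def \<delta>_def u_def v_def x_def y_def by (cases c) auto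
  qed
  ultimately show ?thesis by (rule lg_unsmult[rotated 2, OF gel_carrier, rotated])
qed

lemma mult_entry:
  assumes "X \<in> carrier_mat n n" "Y \<in> carrier_mat n n" "r < n" "s < n"
  shows "(X * Y) $$ (r,s) = (\<Sum>k<n. X $$ (r,k) * Y $$ (k,s))"
  using assms by (simp add: scalar_prod_def atLeast0LessThan)

definition skew :: "nat \<Rightarrow> complex mat \<Rightarrow> bool" where
  "skew n A = (\<forall>i<n. \<forall>j<n. A $$ (i,j) = - cnj (A $$ (j,i)))"

lemma su_iff: "A \<in> su n \<longleftrightarrow> A \<in> carrier_mat n n \<and> skew n A \<and> (\<Sum>i<n. A $$ (i,i)) = 0"
  unfolding su_def skew_def by auto

lemma su_comm:
  assumes X: "X \<in> su n" and Y: "Y \<in> su n"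
  shows "commutator X Y \<in> su n"
proof -
  have Xc: "X \<in> carrier_mat n n" and Yc: "Y \<in> carrier_mat n n" using X Y by (auto simp: su_iff)
  have Xs: "\<And>i j. i < n \<Longrightarrow> j < n \<Longrightarrow> X $$ (i,j) = - cnj (X $$ (j,i))" using X unfolding su_iff skew_def by blast
  have Ys: "\<And>i j. i < n \<Longrightarrow> j < n \<Longrightarrow> Y $$ (i,j) = - cnj (Y $$ (j,i))" using Y unfolding su_iff skew_def by blast
  have ce: "commutator X Y $$ (r,s) = (\<Sum>k<n. X $$ (r,k) * Y $$ (k,s)) - (\<Sum>k<n. Y $$ (r,k) * X $$ (k,s))"
    if "r < n" "s < n" for r s
  proof -
    have "commutator X Y $$ (r,s) = (X*Y)$$(r,s) - (Y*X)$$(r,s)"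
      unfolding commutator_def using Xc Yc that by (subst index_minus_mat) auto
    then show ?thesis by (simp only: mult_entry[OF Xc Yc that] mult_entry[OF Yc Xc that])
  qed
  have sk: "skew n (commutator X Y)"
    unfolding skew_def
  proof (intro allI impI)
    fix i j assume ij: "i < n" "j < n"
    have s1: "(\<Sum>k<n. cnj (X $$ (j,k) * Y $$ (k,i))) = (\<Sum>k<n. X $$ (k,j) * Y $$ (i,k))"
    proof (rule sum.cong[OF refl])
      fix k assume "k \<in> {..<n}"
      then have k: "k < n" by simp
      have "cnj (X $$ (j,k) * Y $$ (k,i)) = cnj (X $$ (j,k)) * cnj (Y $$ (k,i))" by simp
      also have "cnj (X $$ (j,k)) = - X $$ (k,j)" using Xs[OF k ij(2)] by simp
      also have "cnj (Y $$ (k,i)) = - Y $$ (i,k)" using Ys[OF ij(1) k] by simp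
      finally show "cnj (X $$ (j,k) * Y $$ (k,i)) = X $$ (k,j) * Y $$ (i,k)" by simp
    qed
    have s2: "(\<Sum>k<n. cnj (Y $$ (j,k) * X $$ (k,i))) = (\<Sum>k<n. Y $$ (k,j) * X $$ (i,k))"
    proof (rule sum.cong[OF refl])
      fix k assume "k \<in> {..<n}"
      then have k: "k < n" by simp
      have "cnj (Y $$ (j,k) * X $$ (k,i)) = cnj (Y $$ (j,k)) * cnj (X $$ (k,i))" by simp
      also have "cnj (Y $$ (j,k)) = - Y $$ (k,j)" using Ys[OF k ij(2)] by simp
      also have "cnj (X $$ (k,i)) = - X $$ (i,k)" using Xs[OF ij(1) k] by simp
      finally show "cnj (Y $$ (j,k) * X $$ (k,i)) = Y $$ (k,j) * X $$ (i,k)" by simp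
    qed
    have "- cnj (commutator X Y $$ (j,i)) = (\<Sum>k<n. cnj (Y $$ (j,k) * X $$ (k,i))) - (\<Sum>k<n. cnj (X $$ (j,k) * Y $$ (k,i)))"
      unfolding ce[OF ij(2,1)] complex_cnj_diff cnj_sum by simp
    also have "\<dots> = (\<Sum>k<n. Y $$ (k,j) * X $$ (i,k)) - (\<Sum>k<n. X $$ (k,j) * Y $$ (i,k))"
      unfolding s1 s2 ..
    also have "\<dots> = commutator X Y $$ (i,j)"
      unfolding ce[OF ij] by (simp add: mult.commute)
    finally show "commutator X Y $$ (i,j) = - cnj (commutator X Y $$ (j,i))" by simp
  qed
  have tr: "(\<Sum>i<n. commutator X Y $$ (i,i)) = 0"
  proof -
    have "(\<Sum>i<n. commutator X Y $$ (i,i)) = (\<Sum>i<n. (\<Sum>k<n. X $$ (i,k) * Y $$ (k,i)) - (\<Sum>k<n. Y $$ (i,k) * X $$ (k,i)))"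
      by (rule sum.cong[OF refl]) (simp add: ce)
    also have "\<dots> = (\<Sum>i<n. \<Sum>k<n. X $$ (i,k) * Y $$ (k,i)) - (\<Sum>i<n. \<Sum>k<n. Y $$ (i,k) * X $$ (k,i))"
      by (simp add: sum_subtractf)
    also have "(\<Sum>i<n. \<Sum>k<n. Y $$ (i,k) * X $$ (k,i)) = (\<Sum>k<n. \<Sum>i<n. Y $$ (i,k) * X $$ (k,i))"
      by (rule sum.swap)
    also have "\<dots> = (\<Sum>i<n. \<Sum>k<n. X $$ (i,k) * Y $$ (k,i))"
      by (simp add: mult.commute)
    finally show ?thesis by simp
  qed
  have "commutator X Y \<in> carrier_mat n n" using Xc Yc by simp
  then show ?thesis unfolding su_iff using sk tr by blast
qed

lemma su_add: assumes X: "X \<in> su n" and Y: "Y \<in> su n" shows "X + Y \<in> su n"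
proof -
  have Xc: "X \<in> carrier_mat n n" and Yc: "Y \<in> carrier_mat n n" using X Y by (auto simp: su_iff)
  have "(\<Sum>i<n. (X + Y) $$ (i,i)) = (\<Sum>i<n. X $$ (i,i) + Y $$ (i,i))"
    using Yc by (intro sum.cong) auto
  also have "\<dots> = 0" using X Y by (simp add: sum.distrib su_iff)
  finally have t: "(\<Sum>i<n. (X + Y) $$ (i,i)) = 0" .
  have "skew n (X + Y)" unfolding skew_def
  proof (intro allI impI)
    fix i j assume ij: "i < n" "j < n"
    have "X $$ (i,j) = - cnj (X $$ (j,i))" "Y $$ (i,j) = - cnj (Y $$ (j,i))"
      using X Y ij unfolding su_iff skew_def by blast+
    then show "(X + Y) $$ (i,j) = - cnj ((X + Y) $$ (j,i))" using ij Xc Yc by simp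
  qed
  then show ?thesis using t Xc Yc unfolding su_iff by auto
qed

lemma su_smult: assumes X: "X \<in> su n" shows "complex_of_real r \<cdot>\<^sub>m X \<in> su n"
proof -
  have Xc: "X \<in> carrier_mat n n" using X by (auto simp: su_iff)
  have "(\<Sum>i<n. (complex_of_real r \<cdot>\<^sub>m X) $$ (i,i)) = (\<Sum>i<n. complex_of_real r * X $$ (i,i))"
    using Xc by (intro sum.cong) auto
  also have "\<dots> = 0" using X by (simp add: sum_distrib_left[symmetric] su_iff)
  finally have t: "(\<Sum>i<n. (complex_of_real r \<cdot>\<^sub>m X) $$ (i,i)) = 0" .
  have "skew n (complex_of_real r \<cdot>\<^sub>m X)" unfolding skew_def
  proof (intro allI impI)
    fix i j assume ij: "i < n" "j < n"
    have "X $$ (i,j) = - cnj (X $$ (j,i))"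
      using X ij unfolding su_iff skew_def by blast
    then show "(complex_of_real r \<cdot>\<^sub>m X) $$ (i,j) = - cnj ((complex_of_real r \<cdot>\<^sub>m X) $$ (j,i))" using ij Xc by simp
  qed
  then show ?thesis using t Xc unfolding su_iff by auto
qed

lemma su_zero: "0\<^sub>m n n \<in> su n"
  unfolding su_iff skew_def by auto

lemma gel_su: assumes "a < n" "b < n" "a \<noteq> b" shows "gel n c a b \<in> su n"
proof -
  have "(\<Sum>i<n. gel n c a b $$ (i,i)) = (\<Sum>i<n. 0)"
    using assms by (intro sum.cong) (auto simp: gel_index)
  moreover have "skew n (gel n c a b)"
    unfolding skew_def using assms by (auto simp: gel_index yy1_def yy2_def)
  ultimately show ?thesis unfolding su_iff by simp
qed

definition Dg :: "nat \<Rightarrow> nat \<Rightarrow> nat \<Rightarrow> complex mat" where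
  "Dg n a b = mat n n (\<lambda>(r,s). if r = s \<and> r = a then \<i> else if r = s \<and> r = b then - \<i> else 0)"

lemma Dg_index: "r < n \<Longrightarrow> s < n \<Longrightarrow> Dg n a b $$ (r,s) = (if r = s \<and> r = a then \<i> else if r = s \<and> r = b then - \<i> else 0)"
  unfolding Dg_def by simp

lemma Dg_carrier[simp]: "Dg n a b \<in> carrier_mat n n" unfolding Dg_def by simp
lemma Dg_dim[simp]: "dim_row (Dg n a b) = n" "dim_col (Dg n a b) = n" unfolding Dg_def by simp_all

lemma Dg_su: assumes "a < n" "b < n" "a \<noteq> b" shows "Dg n a b \<in> su n"
proof -
  have "(\<Sum>i<n. Dg n a b $$ (i,i)) = (\<Sum>i<n. (if i = a then \<i> else 0) + (if i = b then - \<i> else 0))"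
    using assms by (intro sum.cong) (auto simp: Dg_index)
  also have "\<dots> = 0" using assms by (simp add: sum.distrib)
  finally show ?thesis unfolding su_iff skew_def using assms by (auto simp: Dg_index)
qed

lemma Emat_index: "r < n \<Longrightarrow> s < n \<Longrightarrow> Emat n i j $$ (r,s) = (if r = i \<and> s = j then 1 else 0)"
  unfolding Emat_def by simp

lemma gen_mat_GB: "i < n \<Longrightarrow> j < n \<Longrightarrow> i \<noteq> j \<Longrightarrow> gen_mat n (GB i j) = gel n False i j"
  by (rule eq_matI) (auto simp: Emat_def gel_index yy1_def yy2_def)

lemma gen_mat_GC: "i < n \<Longrightarrow> j < n \<Longrightarrow> i \<noteq> j \<Longrightarrow> gen_mat n (GC i j) = gel n True i j"
  by (rule eq_matI) (auto simp: Emat_def gel_index yy1_def yy2_def)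

lemma gen_mat_GD: "i < n \<Longrightarrow> j < n \<Longrightarrow> i \<noteq> j \<Longrightarrow> gen_mat n (GD i j) = Dg n i j"
  by (rule eq_matI) (auto simp: Emat_def Dg_index)

lemma gen_mat_su: "gen_mat n g \<in> su n" if "valid_gen n g"
proof (cases g)
  case (GB i j) then show ?thesis using that by (auto simp: valid_gen_def simp del: gen_mat.simps simp add: gen_mat_GB gel_su)
next
  case (GC i j) then show ?thesis using that by (auto simp: valid_gen_def simp del: gen_mat.simps simp add: gen_mat_GC gel_su)
next
  case (GD i j) then show ?thesis using that by (auto simp: valid_gen_def simp del: gen_mat.simps simp add: gen_mat_GD Dg_su)
qed

lemma lie_gen_su:
  assumes "A \<in> su n" "\<forall>g\<in>S. valid_gen n g"
  shows "lie_gen n ({A} \<union> gen_mat n ` S) \<subseteq> su n"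
proof
  fix x assume "x \<in> lie_gen n ({A} \<union> gen_mat n ` S)"
  then show "x \<in> su n"
    by (induction rule: lie_gen.induct)
       (use assms in \<open>auto intro: su_comm su_add su_smult su_zero gen_mat_su\<close>)
qed

lemma bracket_BC:
  assumes ab: "a < n" "b < n" "a \<noteq> b"
  shows "commutator (gel n False a b) (gel n True a b) = complex_of_real 2 \<cdot>\<^sub>m Dg n a b"
proof (rule eq_matI)
  fix r s assume "r < dim_row (complex_of_real 2 \<cdot>\<^sub>m Dg n a b)" "s < dim_col (complex_of_real 2 \<cdot>\<^sub>m Dg n a b)"
  then have rs: "r < n" "s < n" by auto
  have g: "\<And>x y. x < n \<Longrightarrow> y < n \<Longrightarrow> gel n True a b $$ (x,y) = (if x = a \<and> y = b then \<i> else if x = b \<and> y = a then \<i> else 0)"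
    by (simp add: gel_index yy1_def yy2_def)
  have e: "commutator (gel n False a b) (gel n True a b) $$ (r,s) =
     (if r = a then 1 * gel n True a b$$(b,s) else if r = b then (-1) * gel n True a b$$(a,s) else 0) -
     (if s = b then 1 * gel n True a b$$(r,a) else if s = a then (-1) * gel n True a b$$(r,b) else 0)"
    using comm_gel[OF gel_carrier rs ab, of False] by (simp add: yy1_def yy2_def)
  show "commutator (gel n False a b) (gel n True a b) $$ (r,s) = (complex_of_real 2 \<cdot>\<^sub>m Dg n a b) $$ (r,s)"
    unfolding e using rs ab by (cases "r = a"; cases "r = b"; cases "s = a"; cases "s = b") (simp_all add: g Dg_index)
qed auto

lemma Dg_in_L:
  assumes "gel n False a b \<in> lie_gen n X" "gel n True a b \<in> lie_gen n X" "a < n" "b < n" "a \<noteq> b"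
  shows "Dg n a b \<in> lie_gen n X"
proof -
  have "commutator (gel n False a b) (gel n True a b) \<in> lie_gen n X"
    using assms by (intro lie_gen.bracket)
  then have "complex_of_real 2 \<cdot>\<^sub>m Dg n a b \<in> lie_gen n X" using bracket_BC[OF assms(3-5)] by simp
  then show ?thesis by (rule lg_unsmult[rotated]) auto
qed

definition nzs :: "nat \<Rightarrow> complex mat \<Rightarrow> (nat \<times> nat) set" where
  "nzs n M = {(r,s). r < n \<and> s < n \<and> M $$ (r,s) \<noteq> 0 \<and> (r,s) \<noteq> (0,0)}"

lemma nzs_finite: "finite (nzs n M)"
  by (rule finite_subset[of _ "{..<n} \<times> {..<n}"]) (auto simp: nzs_def)

lemma su_sub_L:
  assumes allg: "\<And>a b c. a < n \<Longrightarrow> b < n \<Longrightarrow> a \<noteq> b \<Longrightarrow> gel n c a b \<in> lie_gen n X"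
  shows "M \<in> su n \<Longrightarrow> M \<in> lie_gen n X"
proof (induction M rule: measure_induct_rule[where f = "\<lambda>M. card (nzs n M)"])
  case (less M)
  have Mc: "M \<in> carrier_mat n n" using less.prems by (simp add: su_iff)
  have Ms: "\<And>i j. i < n \<Longrightarrow> j < n \<Longrightarrow> M $$ (i,j) = - cnj (M $$ (j,i))"
    using less.prems unfolding su_iff skew_def by blast
  have Mt: "(\<Sum>i<n. M $$ (i,i)) = 0" using less.prems by (simp add: su_iff)
  have red: "M \<in> lie_gen n X"
    if M'su: "M' \<in> su n" and XL: "Y \<in> lie_gen n X" and eq: "M = M' + Y"
      and sub: "nzs n M' \<subseteq> nzs n M - {x}" and x: "x \<in> nzs n M" for M' Y x
  proof -
    have "nzs n M' \<subset> nzs n M" using sub x by blast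
    then have "card (nzs n M') < card (nzs n M)" by (rule psubset_card_mono[OF nzs_finite])
    then have "M' \<in> lie_gen n X" using less.IH M'su by blast
    then show ?thesis unfolding eq using XL by (rule lie_gen.add)
  qed
  show ?case
  proof (cases "\<exists>r s. r < n \<and> s < n \<and> r \<noteq> s \<and> M $$ (r,s) \<noteq> 0")
    case True
    then obtain r s where rs: "r < n" "s < n" "r \<noteq> s" "M $$ (r,s) \<noteq> 0" by blast
    define Y where "Y = complex_of_real (Re (M$$(r,s))) \<cdot>\<^sub>m gel n False r s + complex_of_real (Im (M$$(r,s))) \<cdot>\<^sub>m gel n True r s"
    define M' where "M' = M + (complex_of_real (- Re (M$$(r,s))) \<cdot>\<^sub>m gel n False r s + complex_of_real (- Im (M$$(r,s))) \<cdot>\<^sub>m gel n True r s)"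
    have YL: "Y \<in> lie_gen n X" unfolding Y_def using allg rs by (intro lg_comb) auto
    have M'su: "M' \<in> su n" unfolding M'_def
      using rs less.prems by (intro su_add su_smult gel_su) auto
    have msr: "M$$(s,r) = - cnj (M$$(r,s))" using Ms rs by blast
    have M'v: "M' $$ (x,y) = (if (x = r \<and> y = s) \<or> (x = s \<and> y = r) then 0 else M $$ (x,y))"
      if "x < n" "y < n" for x y
    proof -
      have "M' $$ (x,y) = M $$ (x,y) + (complex_of_real (- Re (M$$(r,s))) * gel n False r s $$ (x,y) + complex_of_real (- Im (M$$(r,s))) * gel n True r s $$ (x,y))"
        unfolding M'_def using that by simp
      also have "\<dots> = (if (x = r \<and> y = s) \<or> (x = s \<and> y = r) then 0 else M $$ (x,y))"
        using that rs msr by (auto simp: gel_index yy1_def yy2_def complex_eq_iff)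
      finally show ?thesis .
    qed
    have eq: "M = M' + Y"
    proof (rule eq_matI)
      fix x y assume "x < dim_row (M' + Y)" "y < dim_col (M' + Y)"
      then have xy: "x < n" "y < n" by (auto simp: Y_def)
      have "(M' + Y) $$ (x,y) = M' $$ (x,y) + (complex_of_real (Re (M$$(r,s))) * gel n False r s $$ (x,y) + complex_of_real (Im (M$$(r,s))) * gel n True r s $$ (x,y))"
        unfolding Y_def using xy by simp
      also have "\<dots> = M $$ (x,y)"
        unfolding M'v[OF xy] using xy rs msr by (auto simp: gel_index yy1_def yy2_def complex_eq_iff)
      finally show "M $$ (x,y) = (M' + Y) $$ (x,y)" by simp
    qed (use Mc in \<open>auto simp: Y_def\<close>)
    have x: "(r,s) \<in> nzs n M" using rs by (auto simp: nzs_def)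
    have sub: "nzs n M' \<subseteq> nzs n M - {(r,s)}"
      unfolding nzs_def using M'v by (auto split: if_splits)
    show ?thesis by (rule red[OF M'su YL eq sub x])
  next
    case False
    then have offd: "\<And>r s. r < n \<Longrightarrow> s < n \<Longrightarrow> r \<noteq> s \<Longrightarrow> M $$ (r,s) = 0" by blast
    show ?thesis
    proof (cases "\<exists>r. 0 < r \<and> r < n \<and> M $$ (r,r) \<noteq> 0")
      case True
      then obtain r where r: "0 < r" "r < n" "M $$ (r,r) \<noteq> 0" by blast
      have n0: "0 < n" using r by simp
      have g: "gel n False 0 r \<in> lie_gen n X" "gel n True 0 r \<in> lie_gen n X" using allg r n0 by auto
      have DL: "Dg n 0 r \<in> lie_gen n X" by (rule Dg_in_L[OF g n0 r(2)]) (use r in auto)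
      define Y where "Y = complex_of_real (- Im (M$$(r,r))) \<cdot>\<^sub>m Dg n 0 r"
      define M' where "M' = M + complex_of_real (Im (M$$(r,r))) \<cdot>\<^sub>m Dg n 0 r"
      have YL: "Y \<in> lie_gen n X" unfolding Y_def using DL by (rule lie_gen.smult)
      have M'su: "M' \<in> su n" unfolding M'_def
        using r less.prems by (intro su_add su_smult Dg_su) auto
      have mrr: "Re (M$$(r,r)) = 0" using Ms[OF r(2) r(2)] by (simp add: complex_eq_iff)
      have M'v: "M' $$ (x,y) = (if x = r \<and> y = r then 0 else if x = 0 \<and> y = 0 then M$$(0,0) + \<i> * complex_of_real (Im (M$$(r,r))) else M $$ (x,y))"
        if "x < n" "y < n" for x y
        unfolding M'_def using that r mrr by (auto simp: Dg_index complex_eq_iff)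
      have eq: "M = M' + Y"
      proof (rule eq_matI)
        fix x y assume "x < dim_row (M' + Y)" "y < dim_col (M' + Y)"
        then have xy: "x < n" "y < n" by (auto simp: Y_def)
        have "(M' + Y) $$ (x,y) = M' $$ (x,y) + complex_of_real (- Im (M$$(r,r))) * Dg n 0 r $$ (x,y)"
          unfolding Y_def using xy by simp
        also have "\<dots> = M $$ (x,y)"
          unfolding M'v[OF xy] using xy r mrr by (auto simp: Dg_index complex_eq_iff)
        finally show "M $$ (x,y) = (M' + Y) $$ (x,y)" by simp
      qed (use Mc in \<open>auto simp: Y_def\<close>)
      have x: "(r,r) \<in> nzs n M" using r by (auto simp: nzs_def)
      have sub: "nzs n M' \<subseteq> nzs n M - {(r,r)}"
        unfolding nzs_def using M'v by (auto split: if_splits)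
      show ?thesis by (rule red[OF M'su YL eq sub x])
    next
      case False
      then have dg: "\<And>r. 0 < r \<Longrightarrow> r < n \<Longrightarrow> M $$ (r,r) = 0" by blast
      have zero: "M $$ (x,y) = 0" if "x < n" "y < n" for x y
      proof (cases "x = y")
        case False then show ?thesis using offd that by blast
      next
        case True
        show ?thesis
        proof (cases "x = 0")
          case False then show ?thesis using dg that True by blast
        next
          case x0: True
          have "(\<Sum>i<n. M $$ (i,i)) = (\<Sum>i<n. if i = 0 then M $$ (0,0) else 0)"
            using dg by (intro sum.cong) auto
          also have "\<dots> = M $$ (0,0)" using that x0 by simp
          finally show ?thesis using Mt True x0 by simp
        qed
      qed
      have "M = 0\<^sub>m n n" by (rule eq_matI) (use zero Mc in auto)
      then show ?thesis using lie_gen.zero by simp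
    qed
  qed
qed

definition good :: "nat \<Rightarrow> complex mat set \<Rightarrow> edge set \<Rightarrow> bool" where
  "good n X E = (\<forall>u v c. ({u,v},c) \<in> E \<longrightarrow> u < n \<and> v < n \<and>
      ((u = v \<and> c = Green) \<or> (u \<noteq> v \<and> c \<noteq> Green \<and> gel n (c = Red) u v \<in> lie_gen n X)))"

definition FULL :: "nat \<Rightarrow> complex mat set \<Rightarrow> bool" where
  "FULL n X = (\<exists>a b. a < n \<and> b < n \<and> a \<noteq> b \<and> gel n False a b \<in> lie_gen n X \<and> gel n True a b \<in> lie_gen n X)"

lemma adj_sym: "adj E u v \<Longrightarrow> adj E v u"
  unfolding adj_def by (simp add: insert_commute)

lemma reach_sym: "reach E u v \<Longrightarrow> reach E v u"
  unfolding reach_def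
proof (induction rule: rtranclp_induct)
  case base then show ?case by simp
next
  case (step y z)
  then show ?case using adj_sym by (metis converse_rtranclp_into_rtranclp)
qed

lemma reach_trans: "reach E u v \<Longrightarrow> reach E v w \<Longrightarrow> reach E u w"
  unfolding reach_def by simp

lemma reach_refl: "reach E u u"
  unfolding reach_def by simp

lemma R1:
  assumes g: "good n X E" and u: "u < n" and r: "reach E u v" and uv: "u \<noteq> v"
  shows "\<exists>c. gel n c u v \<in> lie_gen n X"
proof -
  have "v = u \<or> (v < n \<and> (\<exists>c. gel n c u v \<in> lie_gen n X))"
    using r unfolding reach_def
  proof (induction rule: rtranclp_induct)
    case base then show ?case by simp
  next
    case (step y z)
    from step.hyps(2) obtain c where e: "({y,z},c) \<in> E" unfolding adj_def by blast
    have yz: "y < n" "z < n" using g e unfolding good_def by blast+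
    show ?case
    proof (cases "y = z")
      case True then show ?thesis using step.IH by simp
    next
      case False
      then have gyz: "gel n (c = Red) y z \<in> lie_gen n X" using g e unfolding good_def by blast
      show ?thesis
      proof (cases "y = u")
        case True then show ?thesis using gyz yz by blast
      next
        case yu: False
        then obtain c1 where g1: "gel n c1 u y \<in> lie_gen n X" using step.IH by blast
        show ?thesis
        proof (cases "z = u")
          case True then show ?thesis by simp
        next
          case False
          have "gel n (c1 \<noteq> (c = Red)) u z \<in> lie_gen n X"
            by (rule lg_bracket_gel[OF g1 gyz u yz]) (use yu \<open>y \<noteq> z\<close> False in auto)
          then show ?thesis using yz by blast
        qed
      qed
    qed
  qed
  then show ?thesis using uv by auto
qed

lemma R2:
  assumes g: "good n X E" and w: "closed_walk E vs cs" and odd: "odd (length (filter (\<lambda>c. c = Red) cs))"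
  shows "FULL n X"
proof -
  define rd where "rd = (\<lambda>t. length (filter (\<lambda>c. c = Red) (take t cs)))"
  have len: "length vs = Suc (length cs)" and hl: "hd vs = last vs"
    and ed: "\<And>t. t < length cs \<Longrightarrow> ({vs ! t, vs ! Suc t}, cs ! t) \<in> E"
    using w unfolding closed_walk_def by auto
  have ne: "cs \<noteq> []" using odd by auto
  have v0: "vs ! 0 < n" using ed[of 0] ne g unfolding good_def by blast
  have Q: "(vs!0 = vs!t \<and> even (rd t)) \<or> (vs!0 \<noteq> vs!t \<and> gel n (odd (rd t)) (vs!0) (vs!t) \<in> lie_gen n X) \<or> FULL n X"
    if "t \<le> length cs" for t
    using that
  proof (induction t)
    case 0 then show ?case by (simp add: rd_def)
  next
    case (Suc t)
    then have t: "t < length cs" by simp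
    have IH: "(vs!0 = vs!t \<and> even (rd t)) \<or> (vs!0 \<noteq> vs!t \<and> gel n (odd (rd t)) (vs!0) (vs!t) \<in> lie_gen n X) \<or> FULL n X"
      using Suc.IH t by simp
    have rdS: "rd (Suc t) = rd t + (if cs ! t = Red then 1 else 0)"
      unfolding rd_def using t by (simp add: take_Suc_conv_app_nth)
    have e: "({vs ! t, vs ! Suc t}, cs ! t) \<in> E" using ed t by blast
    have xy: "vs ! t < n" "vs ! Suc t < n" using g e unfolding good_def by blast+
    show ?case
    proof (cases "vs ! t = vs ! Suc t")
      case True
      then have "cs ! t = Green" using g e unfolding good_def by blast
      then have "rd (Suc t) = rd t" using rdS by simp
      then show ?thesis using IH True by simp
    next
      case ne: False
      then have col: "cs ! t \<noteq> Green" and gxy: "gel n (cs ! t = Red) (vs ! t) (vs ! Suc t) \<in> lie_gen n X"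
        using g e unfolding good_def by blast+
      have par: "odd (rd (Suc t)) = (odd (rd t) \<noteq> (cs ! t = Red))" using rdS by auto
      from IH show ?thesis
      proof (elim disjE conjE)
        assume a: "vs!0 = vs!t" "even (rd t)"
        then show ?thesis using gxy ne par by auto
      next
        assume a: "vs!0 \<noteq> vs!t" and g1: "gel n (odd (rd t)) (vs!0) (vs!t) \<in> lie_gen n X"
        show ?thesis
        proof (cases "vs ! Suc t = vs ! 0")
          case True
          have g2: "gel n (cs ! t = Red) (vs!0) (vs!t) \<in> lie_gen n X"
            using lg_gel_swap[OF gxy xy ne] True by simp
          show ?thesis
          proof (cases "odd (rd t) = (cs ! t = Red)")
            case True
            then show ?thesis using par \<open>vs ! Suc t = vs ! 0\<close> by simp
          next
            case False
            then have "FULL n X" unfolding FULL_def using g1 g2 a v0 xy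
              by (cases "odd (rd t)") (metis (full_types))+
            then show ?thesis by simp
          qed
        next
          case False
          have "gel n (odd (rd t) \<noteq> (cs ! t = Red)) (vs!0) (vs ! Suc t) \<in> lie_gen n X"
            by (rule lg_bracket_gel[OF g1 gxy v0 xy]) (use a ne False in auto)
          then show ?thesis using par False by auto
        qed
      next
        assume "FULL n X" then show ?thesis by simp
      qed
    qed
  qed
  have "vs ! 0 = vs ! length cs"
  proof -
    have "vs \<noteq> []" using len by auto
    then have "hd vs = vs ! 0" "last vs = vs ! (length vs - 1)" by (simp_all add: hd_conv_nth last_conv_nth)
    then show ?thesis using hl len by simp
  qed
  moreover have "rd (length cs) = length (filter (\<lambda>c. c = Red) cs)" unfolding rd_def by simp
  ultimately show ?thesis using Q[of "length cs"] odd by auto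
qed

lemma two_step:
  assumes g: "good n X E" and k: "k < n" and c3: "card (component n E k) \<ge> 3"
  shows "\<exists>k' m c1 c3. k' < n \<and> m < n \<and> k \<noteq> k' \<and> k \<noteq> m \<and> k' \<noteq> m \<and> reach E k k' \<and> reach E k m \<and>
     gel n c1 k k' \<in> lie_gen n X \<and> gel n c3 k' m \<in> lie_gen n X"
proof -
  define C where "C = component n E k"
  have fin: "finite C" unfolding C_def component_def by (rule finite_subset[of _ "{..<n}"]) auto
  have kC: "k \<in> C" unfolding C_def component_def using k reach_refl by auto
  have "card (C - {k}) \<ge> 2" using c3 kC fin unfolding C_def[symmetric] by (simp add: card_Diff_singleton)
  then obtain k' where k': "k' \<in> C - {k}" by (metis card.empty not_numeral_le_zero all_not_in_conv)
  have "card (C - {k} - {k'}) \<ge> 1" using \<open>card (C - {k}) \<ge> 2\<close> k' fin by (simp add: card_Diff_singleton)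
  then obtain m where m: "m \<in> C - {k} - {k'}" by (metis card.empty not_one_le_zero all_not_in_conv)
  have r1: "reach E k k'" "k' < n" using k' unfolding C_def component_def by auto
  have r2: "reach E k m" "m < n" using m unfolding C_def component_def by auto
  obtain c1 where "gel n c1 k k' \<in> lie_gen n X" using R1[OF g k r1(1)] k' by auto
  moreover obtain c2 where "gel n c2 k' m \<in> lie_gen n X"
    using R1[OF g r1(2) reach_trans[OF reach_sym[OF r1(1)] r2(1)]] m by auto
  ultimately show ?thesis using r1 r2 k' m by blast
qed

lemma all_from_full:
  assumes D4: "\<And>u v. u < n \<Longrightarrow> v < n \<Longrightarrow> u \<noteq> v \<Longrightarrow> \<exists>c. gel n c u v \<in> lie_gen n X"
    and F: "FULL n X"
  shows "\<And>a b c. a < n \<Longrightarrow> b < n \<Longrightarrow> a \<noteq> b \<Longrightarrow> gel n c a b \<in> lie_gen n X"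
proof -
  obtain a0 b0 where ab0: "a0 < n" "b0 < n" "a0 \<noteq> b0" "gel n False a0 b0 \<in> lie_gen n X" "gel n True a0 b0 \<in> lie_gen n X"
    using F unfolding FULL_def by blast
  have both0: "gel n c a0 b0 \<in> lie_gen n X" for c using ab0 by (cases c) auto
  have ax: "gel n c a0 x \<in> lie_gen n X" if x: "x < n" "x \<noteq> a0" for x c
  proof (cases "x = b0")
    case True then show ?thesis using both0 by simp
  next
    case False
    obtain c' where g': "gel n c' b0 x \<in> lie_gen n X" using D4[OF ab0(2) x(1)] False by metis
    have "gel n ((c \<noteq> c') \<noteq> c') a0 x \<in> lie_gen n X"
      by (rule lg_bracket_gel[OF both0 g' ab0(1,2) x(1) ab0(3)]) (use False x in auto)
    then show ?thesis by (cases c; cases c') simp_all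
  qed
  fix a b c assume ab: "a < n" "b < n" "a \<noteq> b"
  show "gel n c a b \<in> lie_gen n X"
  proof (cases "a = a0")
    case True then show ?thesis using ax ab by simp
  next
    case aa0: False
    show ?thesis
    proof (cases "b = a0")
      case True
      then show ?thesis using lg_gel_swap[OF ax[OF ab(1) aa0, of c] ab0(1) ab(1)] aa0 by simp
    next
      case False
      have g1: "gel n False a a0 \<in> lie_gen n X"
        using lg_gel_swap[OF ax[OF ab(1) aa0, of False] ab0(1) ab(1)] aa0 by simp
      have "gel n (False \<noteq> c) a b \<in> lie_gen n X"
        by (rule lg_bracket_gel[OF g1 ax[OF ab(2) False, of c] ab(1) ab0(1) ab(2)]) (use aa0 False ab in auto)
      then show ?thesis by simp
    qed
  qed
qed

theorem lemma16:
  fixes n :: nat and S :: "gen set" and A :: "complex mat"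
  assumes "n \<ge> 2"
    and "\<forall>g\<in>S. valid_gen n g"
    and "A \<in> su n"
    and "\<forall>v<n. card (component n (edges_S S) v) \<ge> 3"
    and "no_multi_edges (edges_A n A)"
    and "connected_graph n (edges_A n A \<union> edges_S S)"
    and "has_self_loop (edges_A n A \<union> edges_S S) \<or>
         has_odd_red_cycle (edges_A n A \<union> edges_S S)"
  shows "lie_gen n ({A} \<union> gen_mat n ` S) = su n"
proof -
  note val = assms(2) and Asu = assms(3) and comp3 = assms(4) and nome = assms(5)
    and conn = assms(6) and lc = assms(7)
  define X where "X = {A} \<union> gen_mat n ` S"
  define ES where "ES = edges_S S"
  define EA where "EA = edges_A n A"
  have Ac: "A \<in> carrier_mat n n" using Asu by (simp add: su_iff)
  have As: "\<And>i j. i < n \<Longrightarrow> j < n \<Longrightarrow> A $$ (i,j) = - cnj (A $$ (j,i))"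
    using Asu unfolding su_iff skew_def by blast
  have Adiag: "\<And>i. i < n \<Longrightarrow> Re (A $$ (i,i)) = 0"
  proof -
    fix i assume i: "i < n"
    have "A $$ (i,i) = - cnj (A $$ (i,i))" by (rule As[OF i i])
    then show "Re (A $$ (i,i)) = 0" by (simp add: complex_eq_iff)
  qed
  have AL: "A \<in> lie_gen n X" unfolding X_def using Ac by (intro lie_gen.base) auto
  have genL: "gen_mat n g \<in> lie_gen n X" if "g \<in> S" for g
  proof -
    have "gen_mat n g \<in> su n" using val that by (intro gen_mat_su) auto
    then show ?thesis unfolding X_def using that by (intro lie_gen.base) (auto simp: su_iff)
  qed
  have val': "\<And>i j. GB i j \<in> S \<Longrightarrow> i < j \<and> j < n" "\<And>i j. GC i j \<in> S \<Longrightarrow> i < j \<and> j < n"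
    "\<And>i j. GD i j \<in> S \<Longrightarrow> i < j \<and> j < n"
    using val unfolding valid_gen_def by force+
  have dbl: "\<And>u v i j. {u,v} = {i,j} \<Longrightarrow> (u = i \<and> v = j) \<or> (u = j \<and> v = i)"
    by (metis doubleton_eq_iff)
  have gS: "good n X ES" unfolding good_def
  proof (intro allI impI)
    fix u v c assume e: "({u,v},c) \<in> ES"
    show "u < n \<and> v < n \<and> ((u = v \<and> c = Green) \<or> (u \<noteq> v \<and> c \<noteq> Green \<and> gel n (c = Red) u v \<in> lie_gen n X))"
      using e unfolding ES_def edges_S_def
    proof (elim UnE CollectE exE conjE)
      fix i j assume h: "({u,v},c) = ({i,j},Blue)" "GB i j \<in> S"
      have ij: "i < j" "j < n" using val'(1)[OF h(2)] by auto
      have "gel n False i j \<in> lie_gen n X" using genL[OF h(2)] gen_mat_GB[of i n j] ij by simp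
      moreover have "gel n False j i \<in> lie_gen n X" using lg_gel_swap[OF calculation] ij by simp
      moreover have "(u = i \<and> v = j) \<or> (u = j \<and> v = i)" "c = Blue" using h(1) dbl[of u v i j] by auto
      ultimately show ?thesis using ij by auto
    next
      fix i j assume h: "({u,v},c) = ({i,j},Red)" "GC i j \<in> S"
      have ij: "i < j" "j < n" using val'(2)[OF h(2)] by auto
      have "gel n True i j \<in> lie_gen n X" using genL[OF h(2)] gen_mat_GC[of i n j] ij by simp
      moreover have "gel n True j i \<in> lie_gen n X" using lg_gel_swap[OF calculation] ij by simp
      moreover have "(u = i \<and> v = j) \<or> (u = j \<and> v = i)" "c = Red" using h(1) dbl[of u v i j] by auto
      ultimately show ?thesis using ij by auto
    next
      fix i j assume h: "({u,v},c) = ({i},Green)" "GD i j \<in> S"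
      have ij: "i < j" "j < n" using val'(3)[OF h(2)] by auto
      then show ?thesis using h(1) by (auto simp: doubleton_eq_iff)
    next
      fix i j assume h: "({u,v},c) = ({j},Green)" "GD i j \<in> S"
      have ij: "i < j" "j < n" using val'(3)[OF h(2)] by auto
      then show ?thesis using h(1) by (auto simp: doubleton_eq_iff)
    qed
  qed
  have EAb: "({k,l},Blue) \<in> EA \<longleftrightarrow> k < n \<and> l < n \<and> k \<noteq> l \<and> Re (A $$ (k,l)) \<noteq> 0" for k l
  proof
    assume "({k,l},Blue) \<in> EA"
    then obtain i j where h: "{k,l} = {i,j}" "i < n" "j < n" "i \<noteq> j" "Re (A $$ (i,j)) \<noteq> 0"
      unfolding EA_def edges_A_def by auto
    have "Re (A $$ (j,i)) \<noteq> 0" using As[OF h(3,2)] h(5) by simp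
    then show "k < n \<and> l < n \<and> k \<noteq> l \<and> Re (A $$ (k,l)) \<noteq> 0" using dbl[OF h(1)] h by auto
  next
    assume "k < n \<and> l < n \<and> k \<noteq> l \<and> Re (A $$ (k,l)) \<noteq> 0"
    then show "({k,l},Blue) \<in> EA" unfolding EA_def edges_A_def by blast
  qed
  have EAr: "({k,l},Red) \<in> EA \<longleftrightarrow> k < n \<and> l < n \<and> k \<noteq> l \<and> Im (A $$ (k,l)) \<noteq> 0" for k l
  proof
    assume "({k,l},Red) \<in> EA"
    then obtain i j where h: "{k,l} = {i,j}" "i < n" "j < n" "i \<noteq> j" "Im (A $$ (i,j)) \<noteq> 0"
      unfolding EA_def edges_A_def by auto
    have "Im (A $$ (j,i)) \<noteq> 0" using As[OF h(3,2)] h(5) by simp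
    then show "k < n \<and> l < n \<and> k \<noteq> l \<and> Im (A $$ (k,l)) \<noteq> 0" using dbl[OF h(1)] h by auto
  next
    assume "k < n \<and> l < n \<and> k \<noteq> l \<and> Im (A $$ (k,l)) \<noteq> 0"
    then show "({k,l},Red) \<in> EA" unfolding EA_def edges_A_def by blast
  qed
  have EAg: "({k,l},c) \<in> EA \<Longrightarrow> c = Green \<Longrightarrow> k = l \<and> k < n \<and> A $$ (k,k) \<noteq> 0" for k l c
    unfolding EA_def edges_A_def by (auto simp: doubleton_eq_iff)
  have EAc: "({k,l},c) \<in> EA \<Longrightarrow> c = Blue \<or> c = Red \<or> c = Green" for k l c
    by (cases c) auto
  have Aedge: "gel n (c = Red) k l \<in> lie_gen n X"
    if e: "({k,l},c) \<in> EA" and kl: "k \<noteq> l" for k l c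
  proof -
    have cg: "c \<noteq> Green" using EAg[OF e] kl by blast
    have kn: "k < n" "l < n" using e cg EAb EAr EAc[OF e] by blast+
    have coef: "(if c = Red then Im (A $$ (k,l)) else Re (A $$ (k,l))) \<noteq> 0"
      using e cg EAb EAr EAc[OF e] by auto
    have other: "(if c = Red then Re (A $$ (k,l)) else Im (A $$ (k,l))) = 0"
    proof (cases "c = Red")
      case True
      show ?thesis
      proof (rule ccontr)
        assume "(if c = Red then Re (A $$ (k,l)) else Im (A $$ (k,l))) \<noteq> 0"
        then have "({k,l},Blue) \<in> EA" using True EAb kn kl by auto
        then show False using nome e True unfolding no_multi_edges_def EA_def by fastforce
      qed
    next
      case False
      then have cb: "c = Blue" using EAc[OF e] cg by auto
      show ?thesis
      proof (rule ccontr)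
        assume "(if c = Red then Re (A $$ (k,l)) else Im (A $$ (k,l))) \<noteq> 0"
        then have "({k,l},Red) \<in> EA" using False EAr kn kl by auto
        then show False using nome e cb unfolding no_multi_edges_def EA_def by fastforce
      qed
    qed
    show ?thesis
    proof (cases "reach ES k l")
      case True
      obtain c' where g': "gel n c' k l \<in> lie_gen n X" using R1[OF gS kn(1) True kl] by blast
      show ?thesis
      proof (cases "c' = (c = Red)")
        case True then show ?thesis using g' by simp
      next
        case False
        have "gel n (\<not> c') k l \<in> lie_gen n X"
        proof (rule full_pair[OF g' AL kn kl])
          show "A $$ (l,k) = - cnj (A $$ (k,l))" by (rule As[OF kn(2,1)])
          show "Re (A $$ (k,k)) = 0" "Re (A $$ (l,l)) = 0" using Adiag kn by auto
          show "Im (A $$ (k,k)) \<noteq> Im (A $$ (l,l)) \<or> (if c' then Re (A $$ (k,l)) else Im (A $$ (k,l))) \<noteq> 0"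
            using coef False by (cases c') auto
        qed
        then show ?thesis using False by (cases c') auto
      qed
    next
      case nr: False
      obtain k' m c1 c3 where K: "k' < n" "m < n" "k \<noteq> k'" "k \<noteq> m" "k' \<noteq> m" "reach ES k k'" "reach ES k m"
        "gel n c1 k k' \<in> lie_gen n X" "gel n c3 k' m \<in> lie_gen n X"
        using two_step[OF gS kn(1)] comp3 kn unfolding ES_def by blast
      obtain l' p c2 c4 where LL: "l' < n" "p < n" "l \<noteq> l'" "l \<noteq> p" "l' \<noteq> p" "reach ES l l'" "reach ES l p"
        "gel n c2 l l' \<in> lie_gen n X" "gel n c4 l' p \<in> lie_gen n X"
        using two_step[OF gS kn(2)] comp3 kn unfolding ES_def by blast
      have sep: "x \<noteq> y" if "reach ES k x" "reach ES l y" for x y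
      proof
        assume "x = y"
        then have "reach ES k l" using that reach_trans reach_sym by metis
        then show False using nr by simp
      qed
      have d2: "k \<noteq> l" "k \<noteq> l'" "k \<noteq> p" "k' \<noteq> l" "k' \<noteq> l'" "k' \<noteq> p" "m \<noteq> l" "m \<noteq> l'" "m \<noteq> p"
        using sep[OF reach_refl] sep[OF K(6)] sep[OF K(7)] reach_refl LL(6,7) by blast+
      define N where "N = TT (gel n c1 k k') A"
      define M1 where "M1 = TT (gel n c2 l l') N"
      define M2 where "M2 = M1 + TT (gel n c3 k' m) M1"
      define M3 where "M3 = M2 + TT (gel n c4 l' p) M2"
      have NL: "N \<in> lie_gen n X" unfolding N_def by (rule lg_TT[OF K(8) AL])
      have M1L: "M1 \<in> lie_gen n X" unfolding M1_def by (rule lg_TT[OF LL(8) NL])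
      have M2L: "M2 \<in> lie_gen n X" unfolding M2_def by (rule lie_gen.add[OF M1L lg_TT[OF K(9) M1L]])
      have M3L: "M3 \<in> lie_gen n X" unfolding M3_def by (rule lie_gen.add[OF M2L lg_TT[OF LL(9) M2L]])
      have M3eq: "M3 = mat n n (\<lambda>(r,s). if (r = k \<and> s = l) \<or> (r = l \<and> s = k) then A$$(r,s) else 0)"
        unfolding M3_def M2_def M1_def N_def
        by (rule isolate[OF Ac kn(1) K(1) K(2) kn(2) LL(1) LL(2) K(3,4,5) LL(3,4,5) d2])
      define \<rho> where "\<rho> = (if c = Red then Im (A $$ (k,l)) else Re (A $$ (k,l)))"
      have alk: "A $$ (l,k) = - cnj (A $$ (k,l))" by (rule As[OF kn(2,1)])
      have akl1: "A $$ (k,l) = complex_of_real \<rho> * yy1 (c = Red)"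
        using other unfolding \<rho>_def by (cases "c = Red") (simp_all add: yy1_def complex_eq_iff)
      have alk1: "A $$ (l,k) = complex_of_real \<rho> * yy2 (c = Red)"
        using other unfolding alk \<rho>_def by (cases "c = Red") (simp_all add: yy2_def complex_eq_iff)
      have "mat n n (\<lambda>(r,s). if (r = k \<and> s = l) \<or> (r = l \<and> s = k) then A$$(r,s) else 0) =
            complex_of_real \<rho> \<cdot>\<^sub>m gel n (c = Red) k l"
      proof (rule eq_matI)
        fix r s assume "r < dim_row (complex_of_real \<rho> \<cdot>\<^sub>m gel n (c = Red) k l)"
          "s < dim_col (complex_of_real \<rho> \<cdot>\<^sub>m gel n (c = Red) k l)"
        then have rs: "r < n" "s < n" by auto
        have R: "(complex_of_real \<rho> \<cdot>\<^sub>m gel n (c = Red) k l) $$ (r,s) =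
          complex_of_real \<rho> * (if r = k \<and> s = l then yy1 (c = Red) else if r = l \<and> s = k then yy2 (c = Red) else 0)"
          using rs by (simp add: gel_index)
        show "mat n n (\<lambda>(r,s). if (r = k \<and> s = l) \<or> (r = l \<and> s = k) then A$$(r,s) else 0) $$ (r,s) =
            (complex_of_real \<rho> \<cdot>\<^sub>m gel n (c = Red) k l) $$ (r,s)"
          unfolding R using rs kl akl1 alk1 by auto
      qed auto
      then have "complex_of_real \<rho> \<cdot>\<^sub>m gel n (c = Red) k l \<in> lie_gen n X" using M3L M3eq by simp
      moreover have "\<rho> \<noteq> 0" using coef unfolding \<rho>_def by simp
      ultimately show ?thesis using lg_unsmult[of \<rho>] gel_carrier by blast
    qed
  qed
  have EE: "edges_A n A \<union> edges_S S = EA \<union> ES" unfolding EA_def ES_def ..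
  have gE: "good n X (EA \<union> ES)" unfolding good_def
  proof (intro allI impI)
    fix u v c assume e: "({u,v},c) \<in> EA \<union> ES"
    show "u < n \<and> v < n \<and> ((u = v \<and> c = Green) \<or> (u \<noteq> v \<and> c \<noteq> Green \<and> gel n (c = Red) u v \<in> lie_gen n X))"
    proof (cases "({u,v},c) \<in> ES")
      case True then show ?thesis using gS unfolding good_def by blast
    next
      case False
      then have eA: "({u,v},c) \<in> EA" using e by blast
      show ?thesis
      proof (cases "u = v")
        case True
        have "c = Green" using EAc[OF eA] EAb[of u v] EAr[of u v] eA True by auto
        then show ?thesis using EAg[OF eA] True by simp
      next
        case False
        have cg: "c \<noteq> Green" using EAg[OF eA] False by blast
        have "u < n" "v < n" using eA cg EAb EAr EAc[OF eA] by blast+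
        then show ?thesis using Aedge[OF eA False] cg False by simp
      qed
    qed
  qed
  have D4: "\<exists>c. gel n c u v \<in> lie_gen n X" if "u < n" "v < n" "u \<noteq> v" for u v
  proof -
    have "reach (EA \<union> ES) u v" using conn that unfolding connected_graph_def EE by blast
    then show ?thesis by (rule R1[OF gE that(1) _ that(3)])
  qed
  have toFULL: "FULL n X" if "gel n c a b \<in> lie_gen n X" "gel n (\<not> c) a b \<in> lie_gen n X" "a < n" "b < n" "a \<noteq> b" for a b c
  proof (cases c)
    case True then show ?thesis using that unfolding FULL_def by (intro exI[of _ a] exI[of _ b]) simp
  next
    case False then show ?thesis using that unfolding FULL_def by (intro exI[of _ a] exI[of _ b]) simp
  qed
  have F: "FULL n X"
  proof (cases "has_self_loop (EA \<union> ES)")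
    case True
    then obtain i c where e: "({i},c) \<in> EA \<union> ES" unfolding has_self_loop_def by blast
    show ?thesis
    proof (cases "({i},c) \<in> ES")
      case True
      then obtain i0 j0 where gd: "GD i0 j0 \<in> S"
        unfolding ES_def edges_S_def by (auto simp: doubleton_eq_iff dest: val'(1) val'(2))
      have ij: "i0 < j0" "j0 < n" using val'(3)[OF gd] by auto
      have DL: "Dg n i0 j0 \<in> lie_gen n X" using genL[OF gd] gen_mat_GD[of i0 n j0] ij by simp
      obtain c0 where g0: "gel n c0 i0 j0 \<in> lie_gen n X" using D4[of i0 j0] ij by auto
      have "gel n (\<not> c0) i0 j0 \<in> lie_gen n X"
        by (rule full_pair[OF g0 DL]) (use ij in \<open>auto simp: Dg_index\<close>)
      then show ?thesis using toFULL[OF g0] ij by simp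
    next
      case False
      then have eA: "({i,i},c) \<in> EA" using e by simp
      have "c = Green" using EAc[OF eA] EAb[of i i] EAr[of i i] eA by auto
      then have ai: "i < n" "A $$ (i,i) \<noteq> 0" using EAg[OF eA] by auto
      have "\<exists>j<n. A $$ (j,j) \<noteq> A $$ (i,i)"
      proof (rule ccontr)
        assume "\<not> (\<exists>j<n. A $$ (j,j) \<noteq> A $$ (i,i))"
        then have "\<forall>j<n. A $$ (j,j) = A $$ (i,i)" by blast
        then have "(\<Sum>j<n. A $$ (j,j)) = (\<Sum>j<n. A $$ (i,i))" by simp
        then have "of_nat n * A $$ (i,i) = 0" using Asu by (simp add: su_iff)
        then show False using ai by simp
      qed
      then obtain j where j: "j < n" "A $$ (j,j) \<noteq> A $$ (i,i)" by blast
      have ij: "i \<noteq> j" using j by auto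
      obtain c0 where g0: "gel n c0 i j \<in> lie_gen n X" using D4[OF ai(1) j(1) ij] by auto
      have imd: "Im (A $$ (i,i)) \<noteq> Im (A $$ (j,j))"
        using j(2) Adiag[OF ai(1)] Adiag[OF j(1)] by (simp add: complex_eq_iff)
      have "gel n (\<not> c0) i j \<in> lie_gen n X"
        by (rule full_pair[OF g0 AL ai(1) j(1) ij]) (use As[OF j(1) ai(1)] Adiag ai j imd in auto)
      then show ?thesis using toFULL[OF g0] ai j ij by simp
    qed
  next
    case False
    then have "has_odd_red_cycle (EA \<union> ES)" using lc EE by simp
    then obtain vs cs where "closed_walk (EA \<union> ES) vs cs" "odd (length (filter (\<lambda>c. c = Red) cs))"
      unfolding has_odd_red_cycle_def by blast
    then show ?thesis by (rule R2[OF gE])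
  qed
  have allg: "\<And>a b c. a < n \<Longrightarrow> b < n \<Longrightarrow> a \<noteq> b \<Longrightarrow> gel n c a b \<in> lie_gen n X"
    by (rule all_from_full[OF D4 F])
  have "su n \<subseteq> lie_gen n X" using su_sub_L[OF allg] by blast
  moreover have "lie_gen n X \<subseteq> su n" unfolding X_def by (rule lie_gen_su[OF Asu val])
  ultimately show ?thesis unfolding X_def by blast
qed

end
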